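(* Let $N\ge2$, $t,r\ge1$, $m=t+r<N$, $K\ge N$, and let $\mathbf{z}\in\mathbb{C}^N$ and $\mathbf{S}\in\mathbb{C}^{N\times N}$ Hermitian positive definite. Define the GLRT statistic $$t_{\mathrm{GLRT}}=\frac{1+\mathbf{z}^\dagger\mathbf{S}^{-1/2}\mathbf{P}^\perp_{\mathbf{S}^{-1/2}\mathbf{E}_t}\mathbf{S}^{-1/2}\mathbf{z}}{1+\mathbf{z}^\dagger\mathbf{S}^{-1/2}\mathbf{P}^\perp_{\mathbf{S}^{-1/2}\mathbf{E}_m}\mathbf{S}^{-1/2}\mathbf{z}}.$$ Then $\mathbf{z}^\dagger\mathbf{S}^{-1/2}\mathbf{P}^\perp_{\mathbf{S}^{-1/2}\mathbf{E}_t}\mathbf{S}^{-1/2}\mathbf{z}=\frac{1-p_1p_2}{p_1p_2}$, $\mathbf{z}^\dagger\mathbf{S}^{-1/2}\mathbf{P}^\perp_{\mathbf{S}^{-1/2}\mathbf{E}_m}\mathbf{S}^{-1/2}\mathbf{z}=\frac{1-p_2}{p_2}$, and consequently $t_{\mathrm{GLRT}}=1/p_1$.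
   Context: $\mathbf{E}_t=[\mathbf{I}_t\ \mathbf{0}\ \mathbf{0}]^T\in\mathbb{C}^{N\times t}$, $\mathbf{E}_r=[\mathbf{0}\ \mathbf{I}_r\ \mathbf{0}]^T\in\mathbb{C}^{N\times r}$, $\mathbf{E}_m=[\mathbf{E}_t\ \mathbf{E}_r]$. For a full-column-rank $\mathbf{A}$, $\mathbf{P}_{\mathbf{A}}=\mathbf{A}(\mathbf{A}^\dagger\mathbf{A})^{-1}\mathbf{A}^\dagger$ and $\mathbf{P}^\perp_{\mathbf{A}}=\mathbf{I}_N-\mathbf{P}_{\mathbf{A}}$; $\mathbf{S}^{-1/2}$ is the Hermitian positive definite square root of $\mathbf{S}^{-1}$. Partition $\mathbf{z}=[\mathbf{z}_1^T\ \mathbf{z}_2^T\ \mathbf{z}_3^T]^T$ with sizes $t,r,N-m$ and $\mathbf{S}$ conformably into blocks $\mathbf{S}_{ij}$. $\mathbf{z}_{2.3}=\mathbf{z}_2-\mathbf{S}_{23}\mathbf{S}_{33}^{-1}\mathbf{z}_3$, $\mathbf{S}_{2.3}=\mathbf{S}_{22}-\mathbf{S}_{23}\mathbf{S}_{33}^{-1}\mathbf{S}_{32}$, $m_1=\mathbf{z}_{2.3}^\dagger\mathbf{S}_{2.3}^{-1}\mathbf{z}_{2.3}$, $m_2=\mathbf{z}_3^\dagger\mathbf{S}_{33}^{-1}\mathbf{z}_3$, $p_1=1/\bigl(1+\frac{m_1}{1+m_2}\bigr)$, $p_2=1/(1+m_2)$. *)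

theory Defs
  imports "Jordan_Normal_Form.Schur_Decomposition"
begin

definition qform :: "complex vec \<Rightarrow> complex mat \<Rightarrow> complex vec \<Rightarrow> complex" where
  "qform x A y = scalar_prod (map_vec cnj x) (A *\<^sub>v y)"

definition hermitian_mat :: "complex mat \<Rightarrow> bool" where
  "hermitian_mat A \<longleftrightarrow> square_mat A \<and> mat_adjoint A = A"

definition pos_def_mat :: "complex mat \<Rightarrow> bool" where
  "pos_def_mat A \<longleftrightarrow> hermitian_mat A \<and>
     (\<forall>v \<in> carrier_vec (dim_row A). v \<noteq> 0\<^sub>v (dim_row A) \<longrightarrow>
        qform v A v \<in> \<real> \<and> 0 < Re (qform v A v))"

definition mat_inv :: "complex mat \<Rightarrow> complex mat" where
  "mat_inv A = (SOME B. B \<in> carrier_mat (dim_row A) (dim_row A) \<and> inverts_mat A B \<and> inverts_mat B A)"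

definition inv_sqrt :: "complex mat \<Rightarrow> complex mat" where
  "inv_sqrt S = (SOME R. R \<in> carrier_mat (dim_row S) (dim_row S) \<and> pos_def_mat R \<and> R * R = mat_inv S)"

definition proj_mat :: "complex mat \<Rightarrow> complex mat" where
  "proj_mat A = A * mat_inv (mat_adjoint A * A) * mat_adjoint A"

definition proj_perp :: "complex mat \<Rightarrow> complex mat" where
  "proj_perp A = 1\<^sub>m (dim_row A) - proj_mat A"

definition E_t :: "nat \<Rightarrow> nat \<Rightarrow> complex mat" where
  "E_t N t = mat N t (\<lambda>(i, j). if i = j then 1 else 0)"

definition E_r :: "nat \<Rightarrow> nat \<Rightarrow> nat \<Rightarrow> complex mat" where
  "E_r N t r = mat N r (\<lambda>(i, j). if i = t + j then 1 else 0)"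

definition E_m :: "nat \<Rightarrow> nat \<Rightarrow> nat \<Rightarrow> complex mat" where
  "E_m N t r = mat_of_cols N (cols (E_t N t) @ cols (E_r N t r))"

definition subvec :: "complex vec \<Rightarrow> nat \<Rightarrow> nat \<Rightarrow> complex vec" where
  "subvec z off n = vec n (\<lambda>i. z $ (off + i))"

definition subblock :: "complex mat \<Rightarrow> nat \<Rightarrow> nat \<Rightarrow> nat \<Rightarrow> nat \<Rightarrow> complex mat" where
  "subblock S o1 n1 o2 n2 = mat n1 n2 (\<lambda>(i, j). S $$ (o1 + i, o2 + j))"

end

theory Submission
  imports Defs
begin


lemma adj_dims[simp]: "dim_row (mat_adjoint A) = dim_col A" "dim_col (mat_adjoint A) = dim_row A"
  by (auto simp: mat_adjoint_def)

lemma adj_carrier[simp,intro]: "A \<in> carrier_mat nr nc \<Longrightarrow> mat_adjoint A \<in> carrier_mat nc nr"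
  by (metis adj_dims carrier_matD carrier_matI)

lemma adj_index[simp]: "i < dim_col A \<Longrightarrow> j < dim_row A \<Longrightarrow> mat_adjoint A $$ (i,j) = cnj (A $$ (j,i))"
  unfolding mat_adjoint_def mat_of_rows_def by simp

lemma adj_adj[simp]: "mat_adjoint (mat_adjoint (A::complex mat)) = A"
  by (rule eq_matI, auto)

lemma adj_mult: assumes "A \<in> carrier_mat n k" "B \<in> carrier_mat k m"
  shows "mat_adjoint ((A::complex mat) * B) = mat_adjoint B * mat_adjoint A"
proof (rule eq_matI)
  fix i j assume ij: "i < dim_row (mat_adjoint B * mat_adjoint A)" "j < dim_col (mat_adjoint B * mat_adjoint A)"
  hence i: "i < m" and j: "j < n" using assms by auto
  show "mat_adjoint (A * B) $$ (i, j) = (mat_adjoint B * mat_adjoint A) $$ (i, j)"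
    using assms i j by (simp add: scalar_prod_def mult.commute)
qed (use assms in auto)

lemma adj_add: assumes "A \<in> carrier_mat n m" "B \<in> carrier_mat n m"
  shows "mat_adjoint ((A::complex mat) + B) = mat_adjoint A + mat_adjoint B"
  using assms by (intro eq_matI) auto

lemma adj_minus: assumes "A \<in> carrier_mat n m" "B \<in> carrier_mat n m"
  shows "mat_adjoint ((A::complex mat) - B) = mat_adjoint A - mat_adjoint B"
  using assms by (intro eq_matI) auto

lemma adj_one[simp]: "mat_adjoint (1\<^sub>m n :: complex mat) = 1\<^sub>m n"
  by (intro eq_matI) auto

lemma adj_zero[simp]: "mat_adjoint (0\<^sub>m n m :: complex mat) = 0\<^sub>m m n"
  by (intro eq_matI) auto

lemma map_cnj_conj: "map_vec cnj x = conjugate (x :: complex vec)"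
  by (intro eq_vecI) auto

lemma qform_alt: "qform x A y = conjugate x \<bullet> (A *\<^sub>v y)"
  unfolding qform_def map_cnj_conj ..

lemma sprod_adj: assumes x: "x \<in> carrier_vec n" and A: "A \<in> carrier_mat n k" and w: "w \<in> carrier_vec k"
  shows "conjugate x \<bullet> ((A::complex mat) *\<^sub>v w) = conjugate (mat_adjoint A *\<^sub>v x) \<bullet> w"
proof -
  have "conjugate x \<bullet> (A *\<^sub>v w) = (\<Sum>i<n. cnj (x$i) * (\<Sum>j<k. A$$(i,j) * w$j))"
    using assms by (auto simp: scalar_prod_def lessThan_atLeast0)
  also have "\<dots> = (\<Sum>i<n. \<Sum>j<k. cnj (x$i) * A$$(i,j) * w$j)"
    by (simp add: sum_distrib_left mult.assoc)
  also have "\<dots> = (\<Sum>j<k. \<Sum>i<n. cnj (x$i) * A$$(i,j) * w$j)"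
    by (rule sum.swap)
  also have "\<dots> = (\<Sum>j<k. cnj (\<Sum>i<n. cnj (A$$(i,j)) * x$i) * w$j)"
    by (simp add: sum_distrib_right sum_distrib_left mult.commute mult.left_commute)
  also have "\<dots> = conjugate (mat_adjoint A *\<^sub>v x) \<bullet> w"
    using assms by (auto simp: scalar_prod_def lessThan_atLeast0 intro!: sum.cong)
  finally show ?thesis .
qed




lemma inv_exists: assumes A: "(A::complex mat) \<in> carrier_mat n n"
  and ker: "\<And>v. v \<in> carrier_vec n \<Longrightarrow> A *\<^sub>v v = 0\<^sub>v n \<Longrightarrow> v = 0\<^sub>v n"
  shows "\<exists>B\<in>carrier_mat n n. A * B = 1\<^sub>m n \<and> B * A = 1\<^sub>m n"
proof -
  have "det A \<noteq> 0" using det_0_iff_vec_prod_zero[OF A] ker by blast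
  from det_non_zero_imp_unit[OF A this, of undefined]
  show ?thesis unfolding Units_def ring_mat_def by auto
qed

lemma mat_inv_eq: assumes A: "(A::complex mat) \<in> carrier_mat n n" and B: "B \<in> carrier_mat n n"
  and AB: "A * B = 1\<^sub>m n"
  shows "mat_inv A = B"
proof -
  have BA: "B * A = 1\<^sub>m n" by (rule mat_mult_left_right_inverse[OF A B AB])
  have "\<exists>C. C \<in> carrier_mat (dim_row A) (dim_row A) \<and> inverts_mat A C \<and> inverts_mat C A"
    using A B AB BA by (intro exI[of _ B]) (auto simp: inverts_mat_def)
  from someI_ex[OF this] have C: "mat_inv A \<in> carrier_mat n n" "A * mat_inv A = 1\<^sub>m n" "mat_inv A * A = 1\<^sub>m n"
    unfolding mat_inv_def inverts_mat_def using A by auto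
  have "mat_inv A = mat_inv A * (A * B)" using C(1) AB by simp
  also have "\<dots> = (mat_inv A * A) * B" using C(1) A B by (simp add: assoc_mult_mat)
  also have "\<dots> = B" using C(3) B by simp
  finally show ?thesis .
qed

lemma mat_inv_props: assumes A: "(A::complex mat) \<in> carrier_mat n n"
  and ker: "\<And>v. v \<in> carrier_vec n \<Longrightarrow> A *\<^sub>v v = 0\<^sub>v n \<Longrightarrow> v = 0\<^sub>v n"
  shows "mat_inv A \<in> carrier_mat n n" "A * mat_inv A = 1\<^sub>m n" "mat_inv A * A = 1\<^sub>m n"
proof -
  obtain B where B: "B \<in> carrier_mat n n" "A * B = 1\<^sub>m n" "B * A = 1\<^sub>m n" using inv_exists[OF A ker] by blast
  from mat_inv_eq[OF A B(1,2)] B show "mat_inv A \<in> carrier_mat n n" "A * mat_inv A = 1\<^sub>m n" "mat_inv A * A = 1\<^sub>m n" by auto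
qed

lemma cnorm_zero: assumes "v \<in> carrier_vec n" "conjugate v \<bullet> (v :: complex vec) = 0" shows "v = 0\<^sub>v n"
proof -
  have "v \<bullet>c v = 0" using assms conjugate_vec_sprod_comm[of v n v] by auto
  thus ?thesis using assms(1) by simp
qed

lemma cnorm_nonneg: assumes "v \<in> carrier_vec n" shows "conjugate v \<bullet> (v :: complex vec) \<ge> 0"
  using assms conjugate_vec_sprod_comm[of v n v] conjugate_square_ge_0_vec[of v] by auto

lemma ker_from_qform: assumes A: "(A::complex mat) \<in> carrier_mat n n"
  and q: "\<And>v. v \<in> carrier_vec n \<Longrightarrow> v \<noteq> 0\<^sub>v n \<Longrightarrow> qform v A v \<noteq> 0"
  and v: "v \<in> carrier_vec n" and Av: "A *\<^sub>v v = 0\<^sub>v n" shows "v = 0\<^sub>v n"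
proof (rule ccontr)
  assume "v \<noteq> 0\<^sub>v n"
  from q[OF v this] have "qform v A v \<noteq> 0" .
  moreover have "qform v A v = 0" unfolding qform_alt Av using v by simp
  ultimately show False by simp
qed

lemma pd_ker: assumes S: "(S::complex mat) \<in> carrier_mat n n" and pd: "pos_def_mat S"
  and v: "v \<in> carrier_vec n" and Sv: "S *\<^sub>v v = 0\<^sub>v n" shows "v = 0\<^sub>v n"
proof (rule ker_from_qform[OF S _ v Sv])
  fix w :: "complex vec" assume w: "w \<in> carrier_vec n" "w \<noteq> 0\<^sub>v n"
  hence "0 < Re (qform w S w)" using pd S unfolding pos_def_mat_def by auto
  thus "qform w S w \<noteq> 0" by auto
qed

lemma pd_hermitian: "pos_def_mat S \<Longrightarrow> mat_adjoint S = S"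
  unfolding pos_def_mat_def hermitian_mat_def by auto




definition sel :: "nat \<Rightarrow> nat \<Rightarrow> nat \<Rightarrow> complex mat" where
  "sel N q k = mat N k (\<lambda>(i, j). if i = q + j then 1 else 0)"

lemma sel_carrier[simp,intro]: "sel N q k \<in> carrier_mat N k"
  unfolding sel_def by simp

lemma sel_dims[simp]: "dim_row (sel N q k) = N" "dim_col (sel N q k) = k"
  unfolding sel_def by auto

lemma sel_index[simp]: "i < N \<Longrightarrow> j < k \<Longrightarrow> sel N q k $$ (i,j) = (if i = q + j then 1 else 0)"
  unfolding sel_def by auto

lemma sum_ind_left: "(\<Sum>l<(N::nat). (if l = a then 1 else 0) * (f l :: complex)) = (if a < N then f a else 0)"
proof -
  have "(\<Sum>l<N. (if l = a then 1 else 0) * (f l :: complex)) = (\<Sum>l\<in>{..<N}. if l = a then f a else 0)"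
    by (rule sum.cong) auto
  also have "\<dots> = (if a < N then f a else 0)" by (subst sum.delta) auto
  finally show ?thesis .
qed

lemma sum_ind_right: "(\<Sum>l<(N::nat). (f l :: complex) * (if l = a then 1 else 0)) = (if a < N then f a else 0)"
  using sum_ind_left[where N=N and a=a and f=f] by (simp add: mult.commute)

lemma adj_sel_sel: assumes "q + k \<le> N" "q' + k' \<le> N"
  shows "mat_adjoint (sel N q k) * sel N q' k' = mat k k' (\<lambda>(i,j). if q + i = q' + j then 1 else 0)"
proof (rule eq_matI)
  fix i j assume "i < dim_row (mat k k' (\<lambda>(i,j). if q + i = q' + j then 1 else 0 :: complex))"
     "j < dim_col (mat k k' (\<lambda>(i,j). if q + i = q' + j then 1 else 0 :: complex))"
  hence ij: "i < k" "j < k'" by auto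
  have "(mat_adjoint (sel N q k) * sel N q' k') $$ (i,j) = (\<Sum>l<N. (if l = q + i then 1 else 0) * (if l = q' + j then 1 else 0))"
    using ij assms by (auto simp: scalar_prod_def lessThan_atLeast0 intro!: sum.cong)
  also have "\<dots> = (if q + i = q' + j then 1 else 0)" unfolding sum_ind_left using ij assms by auto
  finally show "(mat_adjoint (sel N q k) * sel N q' k') $$ (i,j) = mat k k' (\<lambda>(i,j). if q + i = q' + j then 1 else 0) $$ (i, j)"
    using ij by simp
qed auto

lemma adj_sel_same: "q + k \<le> N \<Longrightarrow> mat_adjoint (sel N q k) * sel N q k = 1\<^sub>m k"
  by (subst adj_sel_sel, auto intro!: eq_matI)

lemma adj_sel_disj: "q + k \<le> N \<Longrightarrow> q' + k' \<le> N \<Longrightarrow> q + k \<le> q' \<or> q' + k' \<le> q \<Longrightarrow>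
   mat_adjoint (sel N q k) * sel N q' k' = 0\<^sub>m k k'"
  by (subst adj_sel_sel, auto intro!: eq_matI)

lemma sel_adj: assumes "q + k \<le> N"
  shows "sel N q k * mat_adjoint (sel N q k) = mat N N (\<lambda>(i,j). if i = j \<and> q \<le> i \<and> i < q + k then 1 else 0)"
proof (rule eq_matI)
  fix i j assume "i < dim_row (mat N N (\<lambda>(i,j). if i = j \<and> q \<le> i \<and> i < q + k then 1 else 0 :: complex))"
     "j < dim_col (mat N N (\<lambda>(i,j). if i = j \<and> q \<le> i \<and> i < q + k then 1 else 0 :: complex))"
  hence ij: "i < N" "j < N" by auto
  have "(sel N q k * mat_adjoint (sel N q k)) $$ (i,j) = (\<Sum>l<k. (if i = q + l then 1 else 0) * (if j = q + l then 1 else 0))"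
    using ij assms by (auto simp: scalar_prod_def lessThan_atLeast0 intro!: sum.cong)
  also have "\<dots> = (\<Sum>l<k. if l = i - q then (if i = j \<and> q \<le> i then 1 else 0) else 0)"
    by (rule sum.cong) auto
  also have "\<dots> = (if i = j \<and> q \<le> i \<and> i < q + k then 1 else 0)" by (auto simp: sum.delta)
  finally show "(sel N q k * mat_adjoint (sel N q k)) $$ (i,j) = mat N N (\<lambda>(i,j). if i = j \<and> q \<le> i \<and> i < q + k then 1 else 0) $$ (i,j)"
    using ij by simp
qed auto

lemma sel_split: assumes "a \<le> N"
  shows "sel N 0 a * mat_adjoint (sel N 0 a) + sel N a (N - a) * mat_adjoint (sel N a (N - a)) = 1\<^sub>m N"
  using assms by (subst sel_adj, simp, subst sel_adj, simp, intro eq_matI, auto)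

lemma sel_split2: assumes "t + r \<le> N"
  shows "sel N t (N - t) * mat_adjoint (sel N t (N - t)) = sel N t r * mat_adjoint (sel N t r) + sel N (t+r) (N - (t+r)) * mat_adjoint (sel N (t+r) (N - (t+r)))"
  using assms by (subst sel_adj, simp, subst sel_adj, simp, subst sel_adj, simp, intro eq_matI, auto)

lemma sel_sel: assumes "q' + k' \<le> k" "q + k \<le> N"
  shows "sel N q k * sel k q' k' = sel N (q + q') k'"
proof (rule eq_matI)
  fix i j assume "i < dim_row (sel N (q + q') k')" "j < dim_col (sel N (q + q') k')"
  hence ij: "i < N" "j < k'" by auto
  have "(sel N q k * sel k q' k') $$ (i,j) = (\<Sum>l<k. (if i = q + l then 1 else 0) * (if l = q' + j then 1 else 0))"
    using ij assms by (auto simp: scalar_prod_def lessThan_atLeast0 intro!: sum.cong)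
  also have "\<dots> = (\<Sum>l<k. if l = q' + j then (if i = q + q' + j then 1 else 0) else 0)"
    by (rule sum.cong) auto
  also have "\<dots> = (if i = q + q' + j then 1 else 0)" using ij assms by (auto simp: sum.delta)
  finally show "(sel N q k * sel k q' k') $$ (i,j) = sel N (q + q') k' $$ (i,j)" using ij by simp
qed auto

lemma E_t_sel: "E_t N t = sel N 0 t"
  unfolding E_t_def sel_def by simp

lemma E_r_sel: "E_r N t r = sel N t r"
  unfolding E_r_def sel_def by simp

lemma E_m_sel: "E_m N t r = sel N 0 (t + r)"
proof (rule eq_matI)
  show "dim_row (E_m N t r) = dim_row (sel N 0 (t + r))" "dim_col (E_m N t r) = dim_col (sel N 0 (t + r))"
    unfolding E_m_def E_t_def E_r_def by auto
  fix i j assume "i < dim_row (sel N 0 (t + r))" "j < dim_col (sel N 0 (t + r))"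
  hence ij: "i < N" "j < t + r" by auto
  show "E_m N t r $$ (i, j) = sel N 0 (t + r) $$ (i, j)"
  proof (cases "j < t")
    case True
    thus ?thesis using ij unfolding E_m_def E_t_def E_r_def
      by (simp add: mat_of_cols_index nth_append)
  next
    case False
    thus ?thesis using ij unfolding E_m_def E_t_def E_r_def
      by (simp add: mat_of_cols_index nth_append)
  qed
qed

lemma subvec_sel: assumes "z \<in> carrier_vec N" "q + k \<le> N"
  shows "subvec z q k = mat_adjoint (sel N q k) *\<^sub>v z"
proof (rule eq_vecI)
  fix i assume "i < dim_vec (mat_adjoint (sel N q k) *\<^sub>v z)"
  hence i: "i < k" by simp
  have "(mat_adjoint (sel N q k) *\<^sub>v z) $ i = (\<Sum>l<N. (if l = q + i then 1 else 0) * z $ l)"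
    using i assms by (auto simp: scalar_prod_def lessThan_atLeast0 intro!: sum.cong)
  also have "\<dots> = z $ (q + i)" unfolding sum_ind_left using i assms by simp
  finally show "subvec z q k $ i = (mat_adjoint (sel N q k) *\<^sub>v z) $ i" using i unfolding subvec_def by simp
qed (simp add: subvec_def)

lemma subblock_sel: assumes S: "S \<in> carrier_mat N N" "o1 + n1 \<le> N" "o2 + n2 \<le> N"
  shows "subblock S o1 n1 o2 n2 = mat_adjoint (sel N o1 n1) * S * sel N o2 n2"
proof (rule eq_matI)
  fix i j assume "i < dim_row (mat_adjoint (sel N o1 n1) * S * sel N o2 n2)" "j < dim_col (mat_adjoint (sel N o1 n1) * S * sel N o2 n2)"
  hence ij: "i < n1" "j < n2" by auto
  have "(mat_adjoint (sel N o1 n1) * S * sel N o2 n2) $$ (i,j) = (mat_adjoint (sel N o1 n1) * (S * sel N o2 n2)) $$ (i,j)"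
    using S by (subst assoc_mult_mat[of _ n1 N _ N _ n2], auto)
  also have "\<dots> = (\<Sum>l<N. (if l = o1 + i then 1 else 0) * (S * sel N o2 n2) $$ (l, j))"
    using ij S by (auto simp: scalar_prod_def lessThan_atLeast0 intro!: sum.cong)
  also have "\<dots> = (S * sel N o2 n2) $$ (o1 + i, j)"
    unfolding sum_ind_left sum_ind_right using ij S by simp
  also have "\<dots> = (\<Sum>l<N. S $$ (o1 + i, l) * (if l = o2 + j then 1 else 0))"
    using ij S by (auto simp: scalar_prod_def lessThan_atLeast0 intro!: sum.cong)
  also have "\<dots> = S $$ (o1 + i, o2 + j)"
    unfolding sum_ind_left sum_ind_right using ij S by simp
  finally show "subblock S o1 n1 o2 n2 $$ (i, j) = (mat_adjoint (sel N o1 n1) * S * sel N o2 n2) $$ (i, j)"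
    using ij unfolding subblock_def by simp
qed (auto simp: subblock_def)




lemma massoc: "dim_col A = dim_row B \<Longrightarrow> dim_col B = dim_row C \<Longrightarrow> (A::complex mat) * B * C = A * (B * C)"
  by (rule assoc_mult_mat[of A "dim_row A" "dim_col A" B "dim_col B" C "dim_col C"]) auto

lemma mdist_l_add: "dim_col A = dim_row B \<Longrightarrow> dim_row B = dim_row C \<Longrightarrow> dim_col B = dim_col C \<Longrightarrow>
   (A::complex mat) * (B + C) = A * B + A * C"
  by (rule mult_add_distrib_mat[of A "dim_row A" "dim_col A" B "dim_col B" C]) auto

lemma mdist_r_add: "dim_col A = dim_row C \<Longrightarrow> dim_row A = dim_row B \<Longrightarrow> dim_col A = dim_col B \<Longrightarrow>
   ((A::complex mat) + B) * C = A * C + B * C"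
  by (rule add_mult_distrib_mat[of A "dim_row A" "dim_col A" B C "dim_col C"]) auto

lemma mdist_l_minus: "dim_col A = dim_row B \<Longrightarrow> dim_row B = dim_row C \<Longrightarrow> dim_col B = dim_col C \<Longrightarrow>
   (A::complex mat) * (B - C) = A * B - A * C"
  by (rule mult_minus_distrib_mat[of A "dim_row A" "dim_col A" B "dim_col B" C]) auto

lemma mdist_r_minus: "dim_col A = dim_row C \<Longrightarrow> dim_row A = dim_row B \<Longrightarrow> dim_col A = dim_col B \<Longrightarrow>
   ((A::complex mat) - B) * C = A * C - B * C"
  by (rule minus_mult_distrib_mat[of A "dim_row A" "dim_col A" B C "dim_col C"]) auto

lemma mone_l: "dim_row A = n \<Longrightarrow> 1\<^sub>m n * (A::complex mat) = A"
  by (rule left_mult_one_mat[of A n "dim_col A"]) auto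

lemma mone_r: "dim_col A = n \<Longrightarrow> (A::complex mat) * 1\<^sub>m n = A"
  by (rule right_mult_one_mat[of A "dim_row A" n]) auto

lemma mzero_l: "dim_row A = n \<Longrightarrow> 0\<^sub>m m n * (A::complex mat) = 0\<^sub>m m (dim_col A)"
  by (rule left_mult_zero_mat[of A n "dim_col A"]) auto

lemma mzero_r: "dim_col A = n \<Longrightarrow> (A::complex mat) * 0\<^sub>m n m = 0\<^sub>m (dim_row A) m"
  by (rule right_mult_zero_mat[of A "dim_row A" n]) auto

lemma rule_ext: "(A::complex mat) * B = C \<Longrightarrow> dim_col A = dim_row B \<Longrightarrow> dim_col B = dim_row X \<Longrightarrow> A * (B * X) = C * X"
  using massoc[of A B X] by simp

lemma madd_zero_l: "dim_row A = n \<Longrightarrow> dim_col A = m \<Longrightarrow> 0\<^sub>m n m + (A::complex mat) = A"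
  by (intro eq_matI) auto

lemma madd_zero_r: "dim_row A = n \<Longrightarrow> dim_col A = m \<Longrightarrow> (A::complex mat) + 0\<^sub>m n m = A"
  by (intro eq_matI) auto

lemma mminus_zero_r: "dim_row A = n \<Longrightarrow> dim_col A = m \<Longrightarrow> (A::complex mat) - 0\<^sub>m n m = A"
  by (intro eq_matI) auto




lemma proj_lemma:
  fixes W S E F Gi Hi :: "complex mat"
  assumes S: "S \<in> carrier_mat N N" and W: "W \<in> carrier_mat N N"
    and SW: "S * W = 1\<^sub>m N" and WS: "W * S = 1\<^sub>m N"
    and E: "E \<in> carrier_mat N k" and F: "F \<in> carrier_mat N l"
    and EE: "mat_adjoint E * E = 1\<^sub>m k" and EF: "mat_adjoint E * F = 0\<^sub>m k l"
    and FF: "mat_adjoint F * F = 1\<^sub>m l"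
    and split: "E * mat_adjoint E + F * mat_adjoint F = 1\<^sub>m N"
    and Gi: "Gi \<in> carrier_mat k k" and G1: "mat_adjoint E * W * E * Gi = 1\<^sub>m k" and G2: "Gi * (mat_adjoint E * W * E) = 1\<^sub>m k"
    and Hi: "Hi \<in> carrier_mat l l" and H1: "mat_adjoint F * S * F * Hi = 1\<^sub>m l"
  shows "W - W * E * Gi * mat_adjoint E * W = F * Hi * mat_adjoint F"
proof -
  define Ea where "Ea = mat_adjoint E"
  define Fa where "Fa = mat_adjoint F"
  have dims: "dim_row S = N" "dim_col S = N" "dim_row W = N" "dim_col W = N"
    "dim_row E = N" "dim_col E = k" "dim_row Ea = k" "dim_col Ea = N"
    "dim_row F = N" "dim_col F = l" "dim_row Fa = l" "dim_col Fa = N"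
    "dim_row Gi = k" "dim_col Gi = k" "dim_row Hi = l" "dim_col Hi = l"
    using S W E F Gi Hi unfolding Ea_def Fa_def by auto
  note EE = EE[folded Ea_def] and EF = EF[folded Ea_def] and FF = FF[folded Fa_def]
  note split = split[folded Ea_def Fa_def] and G1 = G1[folded Ea_def] and G2 = G2[folded Ea_def]
  note H1 = H1[folded Fa_def]
  have FE: "Fa * E = 0\<^sub>m l k"
  proof -
    have "Fa * E = mat_adjoint (Ea * F)" unfolding Fa_def Ea_def using adj_mult[OF adj_carrier[OF E] F] by simp
    also have "\<dots> = 0\<^sub>m l k" unfolding EF by simp
    finally show ?thesis .
  qed
  define X where "X = W - W * E * Gi * Ea * W"
  have dX: "dim_row X = N" "dim_col X = N" unfolding X_def using dims by auto
  have EX: "Ea * X = 0\<^sub>m k N"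
  proof -
    have "Ea * X = Ea * W - Ea * (W * E * Gi * Ea * W)" unfolding X_def
      by (rule mdist_l_minus) (use dims in auto)
    also have "Ea * (W * E * Gi * Ea * W) = (Ea * W * E * Gi) * (Ea * W)"
      using dims by (simp add: massoc)
    also have "\<dots> = Ea * W" unfolding G1 using dims by (simp add: mone_l)
    finally show ?thesis using dims by (intro eq_matI) auto
  qed
  have XE: "X * E = 0\<^sub>m N k"
  proof -
    have "X * E = W * E - (W * E * Gi * Ea * W) * E" unfolding X_def
      by (rule mdist_r_minus) (use dims in auto)
    also have "(W * E * Gi * Ea * W) * E = (W * E) * (Gi * (Ea * W * E))"
      using dims by (simp add: massoc)
    also have "\<dots> = W * E" unfolding G2 using dims by (simp add: mone_r)
    finally show ?thesis using dims by (intro eq_matI) auto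
  qed
  have XSF: "X * S * F = F"
  proof -
    have "X * S * F = W * S * F - (W * E * Gi * Ea * W) * S * F" unfolding X_def
      using dims by (simp add: mdist_r_minus)
    also have "(W * E * Gi * Ea * W) * S * F = W * E * Gi * ((Ea * (W * S)) * F)"
      using dims by (simp add: massoc)
    also have "\<dots> = 0\<^sub>m N l" unfolding WS using dims by (simp add: mone_r EF mzero_r)
    also have "W * S * F = F" unfolding WS using dims by (simp add: mone_l)
    finally show ?thesis using dims by (intro eq_matI) auto
  qed
  have Xa: "X = X * F * Fa"
  proof -
    have "X = X * 1\<^sub>m N" using dX by (simp add: mone_r)
    also have "\<dots> = X * (E * Ea + F * Fa)" unfolding split ..
    also have "\<dots> = (X * E) * Ea + X * F * Fa"
      using dims dX by (simp add: mdist_l_add massoc)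
    also have "\<dots> = X * F * Fa"
      unfolding XE using dims dX by (simp add: mzero_l madd_zero_l)
    finally show ?thesis .
  qed
  have Xb: "X = F * (Fa * X)"
  proof -
    have "X = 1\<^sub>m N * X" using dX by (simp add: mone_l)
    also have "\<dots> = (E * Ea + F * Fa) * X" unfolding split ..
    also have "\<dots> = E * (Ea * X) + F * (Fa * X)"
      using dims dX by (simp add: mdist_r_add massoc)
    also have "\<dots> = F * (Fa * X)"
      unfolding EX using dims dX by (simp add: mzero_r madd_zero_l)
    finally show ?thesis .
  qed
  have Xdec: "X = F * (Fa * X * F) * Fa"
  proof -
    have "X = F * (Fa * (X * F * Fa))" using Xb Xa by simp
    also have "\<dots> = F * (Fa * X * F) * Fa" using dims dX by (simp add: massoc)
    finally show ?thesis .
  qed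
  have FFa: "F * Fa = 1\<^sub>m N - E * Ea"
  proof (rule eq_matI)
    fix i j assume "i < dim_row (1\<^sub>m N - E * Ea)" "j < dim_col (1\<^sub>m N - E * Ea)"
    hence ij: "i < N" "j < N" using dims by auto
    have "(E * Ea + F * Fa) $$ (i,j) = 1\<^sub>m N $$ (i,j)" using split by simp
    hence "(E * Ea) $$ (i,j) + (F * Fa) $$ (i,j) = 1\<^sub>m N $$ (i,j)" using ij dims by simp
    hence "(F * Fa) $$ (i,j) = 1\<^sub>m N $$ (i,j) - (E * Ea) $$ (i,j)" by (simp add: algebra_simps)
    thus "(F * Fa) $$ (i,j) = (1\<^sub>m N - E * Ea) $$ (i,j)" using ij dims by simp
  qed (use dims in auto)
  have XFF: "X * (F * Fa) = X"
  proof -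
    have "X * (E * Ea) = 0\<^sub>m N N" using dims dX by (simp add: massoc[symmetric] XE mzero_l)
    thus ?thesis unfolding FFa using dims dX by (simp add: mdist_l_minus mone_r mminus_zero_r)
  qed
  have "Fa * X * F * (Fa * S * F) = 1\<^sub>m l"
  proof -
    have "Fa * X * F * (Fa * S * F) = Fa * (X * (F * Fa)) * S * F"
      using dims dX by (simp add: massoc)
    also have "\<dots> = Fa * (X * S * F)" unfolding XFF using dims dX by (simp add: massoc)
    also have "\<dots> = 1\<^sub>m l" unfolding XSF FF ..
    finally show ?thesis .
  qed
  hence "Fa * X * F = Hi"
  proof -
    assume 1: "Fa * X * F * (Fa * S * F) = 1\<^sub>m l"
    have "Fa * X * F = Fa * X * F * (Fa * S * F * Hi)" unfolding H1 using dims dX by (simp add: mone_r)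
    also have "\<dots> = Fa * X * F * (Fa * S * F) * Hi" using dims dX by (simp add: massoc)
    also have "\<dots> = Hi" unfolding 1 using dims by (simp add: mone_l)
    finally show ?thesis .
  qed
  with Xdec show ?thesis unfolding X_def Fa_def Ea_def by simp
qed




lemma mvassoc: "dim_col A = dim_row B \<Longrightarrow> dim_col B = dim_vec v \<Longrightarrow> (A::complex mat) * B *\<^sub>v v = A *\<^sub>v (B *\<^sub>v v)"
  by (rule assoc_mult_mat_vec[of A "dim_row A" "dim_col A" B "dim_col B"]) (auto intro: carrier_vecI)

lemma mv_dist_add: "dim_vec v = dim_col A \<Longrightarrow> dim_vec w = dim_col A \<Longrightarrow> (A::complex mat) *\<^sub>v (v + w) = A *\<^sub>v v + A *\<^sub>v w"
  by (rule mult_add_distrib_mat_vec[of A "dim_row A" "dim_col A"]) (auto intro: carrier_vecI)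

lemma mv_dist_minus: "dim_vec v = dim_col A \<Longrightarrow> dim_vec w = dim_col A \<Longrightarrow> (A::complex mat) *\<^sub>v (v - w) = A *\<^sub>v v - A *\<^sub>v w"
  by (rule mult_minus_distrib_mat_vec[of A "dim_row A" "dim_col A"]) (auto intro: carrier_vecI)

lemma mv_add_dist: "dim_row A = dim_row B \<Longrightarrow> dim_col A = dim_col B \<Longrightarrow> dim_vec v = dim_col A \<Longrightarrow> ((A::complex mat) + B) *\<^sub>v v = A *\<^sub>v v + B *\<^sub>v v"
  by (rule add_mult_distrib_mat_vec[of A "dim_row A" "dim_col A"]) (auto intro: carrier_vecI)

lemma mv_minus_dist: "dim_row A = dim_row B \<Longrightarrow> dim_col A = dim_col B \<Longrightarrow> dim_vec v = dim_col A \<Longrightarrow> ((A::complex mat) - B) *\<^sub>v v = A *\<^sub>v v - B *\<^sub>v v"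
  by (rule minus_mult_distrib_mat_vec[of A "dim_row A" "dim_col A"]) (auto intro: carrier_vecI)

lemma mv_one: "dim_vec v = n \<Longrightarrow> 1\<^sub>m n *\<^sub>v (v::complex vec) = v"
  by (rule one_mult_mat_vec) (auto intro: carrier_vecI)

lemma mv_zero: "dim_vec v = m \<Longrightarrow> 0\<^sub>m n m *\<^sub>v (v::complex vec) = 0\<^sub>v n"
  by (intro eq_vecI) (auto simp: scalar_prod_def)

lemma mv_zerov: "dim_col A = n \<Longrightarrow> (A::complex mat) *\<^sub>v 0\<^sub>v n = 0\<^sub>v (dim_row A)"
  by (intro eq_vecI) (auto simp: scalar_prod_def)

lemma conj_minus: "dim_vec v = dim_vec w \<Longrightarrow> conjugate ((v::complex vec) - w) = conjugate v - conjugate w"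
  by (intro eq_vecI) auto

lemma sp_minus_l: "dim_vec a = dim_vec c \<Longrightarrow> dim_vec b = dim_vec c \<Longrightarrow> ((a::complex vec) - b) \<bullet> c = a \<bullet> c - b \<bullet> c"
  by (rule minus_scalar_prod_distrib[of _ "dim_vec c"]) (auto intro: carrier_vecI)

lemma sp_minus_r: "dim_vec a = dim_vec b \<Longrightarrow> dim_vec a = dim_vec c \<Longrightarrow> (a::complex vec) \<bullet> (b - c) = a \<bullet> b - a \<bullet> c"
  by (rule scalar_prod_minus_distrib[of _ "dim_vec a"]) (auto intro: carrier_vecI)

lemma sp_add_r: "dim_vec a = dim_vec b \<Longrightarrow> dim_vec a = dim_vec c \<Longrightarrow> (a::complex vec) \<bullet> (b + c) = a \<bullet> b + a \<bullet> c"
  by (rule scalar_prod_add_distrib[of _ "dim_vec a"]) (auto intro: carrier_vecI)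

lemma vminus_add: "dim_vec a = dim_vec b \<Longrightarrow> dim_vec b = dim_vec c \<Longrightarrow> (a::complex vec) + b - c = a + (b - c)"
  by (intro eq_vecI) auto

lemma sprod_adj': "dim_vec x = dim_row A \<Longrightarrow> dim_vec w = dim_col A \<Longrightarrow>
  conjugate x \<bullet> ((A::complex mat) *\<^sub>v w) = conjugate (mat_adjoint A *\<^sub>v x) \<bullet> w"
  by (rule sprod_adj[of x "dim_row A" A "dim_col A" w]) (auto intro: carrier_vecI)

lemma qform_compress: "dim_row F = dim_row M \<Longrightarrow> dim_col M = dim_row M \<Longrightarrow> dim_vec w = dim_col F \<Longrightarrow>
   qform w (mat_adjoint F * M * F) w = qform (F *\<^sub>v w) M (F *\<^sub>v w)"
  unfolding qform_alt
  by (simp add: mvassoc sprod_adj')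

lemma qform_sandwich: "dim_vec x = dim_row F \<Longrightarrow> dim_col F = dim_row M \<Longrightarrow> dim_col M = dim_row M \<Longrightarrow>
   qform x (F * M * mat_adjoint F) x = qform (mat_adjoint F *\<^sub>v x) M (mat_adjoint F *\<^sub>v x)"
  unfolding qform_alt
  by (simp add: mvassoc sprod_adj')




lemma veq_sub: "dim_vec a = dim_vec b \<Longrightarrow> dim_vec c = dim_vec b \<Longrightarrow> (a::complex vec) = b + c \<Longrightarrow> c = a - b"
  by (intro eq_vecI) auto

lemma adj3: "dim_col A = dim_row B \<Longrightarrow> dim_col B = dim_row C \<Longrightarrow>
   mat_adjoint ((A::complex mat) * B * C) = mat_adjoint C * mat_adjoint B * mat_adjoint A"
proof -
  assume d: "dim_col A = dim_row B" "dim_col B = dim_row C"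
  have "mat_adjoint (A * B * C) = mat_adjoint C * mat_adjoint (A * B)"
    by (rule adj_mult[of _ "dim_row A" "dim_col B" _ "dim_col C"]) (use d in \<open>auto intro: carrier_matI\<close>)
  also have "mat_adjoint (A * B) = mat_adjoint B * mat_adjoint A"
    by (rule adj_mult[of _ "dim_row A" "dim_col A" _ "dim_col B"]) (use d in \<open>auto intro: carrier_matI\<close>)
  finally show ?thesis using d by (simp add: massoc)
qed

lemma herm_inv: assumes D: "(D::complex mat) \<in> carrier_mat b b" and DH: "mat_adjoint D = D"
  and Di: "Di \<in> carrier_mat b b" and DDi: "D * Di = 1\<^sub>m b" and DiD: "Di * D = 1\<^sub>m b"
  shows "mat_adjoint Di = Di"
proof -
  have "D * mat_adjoint Di = mat_adjoint (Di * D)" using adj_mult[OF Di D] DH by simp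
  also have "\<dots> = 1\<^sub>m b" unfolding DiD by simp
  finally have "mat_inv D = mat_adjoint Di" using mat_inv_eq[OF D adj_carrier[OF Di]] by simp
  moreover have "mat_inv D = Di" using mat_inv_eq[OF D Di DDi] .
  ultimately show ?thesis by simp
qed

lemma schur_qform:
  fixes M Mi P2 P3 Di Sci :: "complex mat" and x :: "complex vec"
  assumes M: "M \<in> carrier_mat n n" and Mi: "Mi \<in> carrier_mat n n" and MMi: "M * Mi = 1\<^sub>m n"
    and MH: "mat_adjoint M = M"
    and P2: "P2 \<in> carrier_mat n a" and P3: "P3 \<in> carrier_mat n b"
    and P23: "mat_adjoint P2 * P3 = 0\<^sub>m a b"
    and split: "P2 * mat_adjoint P2 + P3 * mat_adjoint P3 = 1\<^sub>m n"
    and Di: "Di \<in> carrier_mat b b" and DDi: "mat_adjoint P3 * M * P3 * Di = 1\<^sub>m b"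
    and DiD: "Di * (mat_adjoint P3 * M * P3) = 1\<^sub>m b"
    and Sci: "Sci \<in> carrier_mat a a"
    and SciSc: "Sci * (mat_adjoint P2 * M * P2 - mat_adjoint P2 * M * P3 * Di * (mat_adjoint P3 * M * P2)) = 1\<^sub>m a"
    and x: "dim_vec x = n"
  shows "qform x Mi x =
     qform (mat_adjoint P2 *\<^sub>v x - mat_adjoint P2 * M * P3 * Di *\<^sub>v (mat_adjoint P3 *\<^sub>v x)) Sci
           (mat_adjoint P2 *\<^sub>v x - mat_adjoint P2 * M * P3 * Di *\<^sub>v (mat_adjoint P3 *\<^sub>v x))
     + qform (mat_adjoint P3 *\<^sub>v x) Di (mat_adjoint P3 *\<^sub>v x)"
proof -
  define P2a where "P2a = mat_adjoint P2"
  define P3a where "P3a = mat_adjoint P3"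
  define A where "A = P2a * M * P2"
  define B where "B = P2a * M * P3"
  define C where "C = P3a * M * P2"
  define D where "D = P3a * M * P3"
  define Sc where "Sc = A - B * Di * C"
  have dims: "dim_row M = n" "dim_col M = n" "dim_row Mi = n" "dim_col Mi = n"
    "dim_row P2 = n" "dim_col P2 = a" "dim_row P3 = n" "dim_col P3 = b"
    "dim_row P2a = a" "dim_col P2a = n" "dim_row P3a = b" "dim_col P3a = n"
    "dim_row Di = b" "dim_col Di = b" "dim_row Sci = a" "dim_col Sci = a"
    using M Mi P2 P3 Di Sci unfolding P2a_def P3a_def by auto
  have dims2: "dim_row A = a" "dim_col A = a" "dim_row B = a" "dim_col B = b"
    "dim_row C = b" "dim_col C = a" "dim_row D = b" "dim_col D = b" "dim_row Sc = a" "dim_col Sc = a"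
    unfolding A_def B_def C_def D_def Sc_def using dims by auto
  note split = split[folded P2a_def, folded P3a_def]
  note DDi = DDi[folded P3a_def, folded D_def] and DiD = DiD[folded P3a_def, folded D_def]
  note SciSc = SciSc[folded P2a_def, folded P3a_def, folded A_def, folded B_def, folded C_def, folded Sc_def]
  have CH: "mat_adjoint C = B" unfolding C_def B_def P3a_def P2a_def
    using dims by (simp add: adj3 MH)
  have DH: "mat_adjoint D = D" unfolding D_def P3a_def
    using dims by (simp add: adj3 MH)
  have DiH: "mat_adjoint Di = Di"
    by (rule herm_inv[of D b]) (use dims2 dims DDi DiD Di DH in \<open>auto intro: carrier_matI\<close>)
  define y where "y = Mi *\<^sub>v x"
  define y2 where "y2 = P2a *\<^sub>v y"
  define y3 where "y3 = P3a *\<^sub>v y"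
  define x2 where "x2 = P2a *\<^sub>v x"
  define x3 where "x3 = P3a *\<^sub>v x"
  define u where "u = x2 - B * Di *\<^sub>v x3"
  have dv: "dim_vec y = n" "dim_vec y2 = a" "dim_vec y3 = b" "dim_vec x2 = a" "dim_vec x3 = b" "dim_vec u = a"
    unfolding y_def y2_def y3_def x2_def x3_def u_def using dims dims2 by auto
  have ydec: "y = P2 *\<^sub>v y2 + P3 *\<^sub>v y3"
  proof -
    have "y = 1\<^sub>m n *\<^sub>v y" using dv by (simp add: mv_one)
    also have "\<dots> = (P2 * P2a + P3 * P3a) *\<^sub>v y" unfolding split ..
    also have "\<dots> = P2 *\<^sub>v y2 + P3 *\<^sub>v y3" unfolding y2_def y3_def
      using dims dv by (simp add: mv_add_dist mvassoc)
    finally show ?thesis .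
  qed
  have Myx: "M *\<^sub>v y = x" unfolding y_def using dims x
    by (simp add: mvassoc[symmetric] MMi mv_one)
  have x2eq: "x2 = A *\<^sub>v y2 + B *\<^sub>v y3"
  proof -
    have "x2 = P2a *\<^sub>v (M *\<^sub>v (P2 *\<^sub>v y2 + P3 *\<^sub>v y3))" unfolding x2_def Myx[symmetric] ydec[symmetric] ..
    also have "\<dots> = A *\<^sub>v y2 + B *\<^sub>v y3" unfolding A_def B_def using dims dv
      by (simp add: mv_dist_add mvassoc)
    finally show ?thesis .
  qed
  have x3eq: "x3 = C *\<^sub>v y2 + D *\<^sub>v y3"
  proof -
    have "x3 = P3a *\<^sub>v (M *\<^sub>v (P2 *\<^sub>v y2 + P3 *\<^sub>v y3))" unfolding x3_def Myx[symmetric] ydec[symmetric] ..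
    also have "\<dots> = C *\<^sub>v y2 + D *\<^sub>v y3" unfolding C_def D_def using dims dv
      by (simp add: mv_dist_add mvassoc)
    finally show ?thesis .
  qed
  have y3eq: "y3 = Di *\<^sub>v x3 - Di *\<^sub>v (C *\<^sub>v y2)"
  proof (rule veq_sub)
    have "Di *\<^sub>v x3 = Di *\<^sub>v (C *\<^sub>v y2) + (Di * D) *\<^sub>v y3" unfolding x3eq using dims dims2 dv
      by (simp add: mv_dist_add mvassoc)
    thus "Di *\<^sub>v x3 = Di *\<^sub>v (C *\<^sub>v y2) + y3" unfolding DiD using dv by (simp add: mv_one)
  qed (use dims dims2 dv in auto)
  have Scy: "Sc *\<^sub>v y2 = u"
  proof (rule eq_vecI)
    have u1: "u = A *\<^sub>v y2 + (B *\<^sub>v (Di *\<^sub>v x3) - B *\<^sub>v (Di *\<^sub>v (C *\<^sub>v y2))) - B *\<^sub>v (Di *\<^sub>v x3)"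
      unfolding u_def x2eq y3eq using dims dims2 dv by (simp add: mv_dist_minus mvassoc)
    have s1: "Sc *\<^sub>v y2 = A *\<^sub>v y2 - B *\<^sub>v (Di *\<^sub>v (C *\<^sub>v y2))"
      unfolding Sc_def using dims dims2 dv by (simp add: mv_minus_dist mvassoc)
    fix i assume "i < dim_vec u"
    hence i: "i < a" using dv by simp
    show "(Sc *\<^sub>v y2) $ i = u $ i" unfolding s1 u1 using i dims dims2 dv by simp
  qed (use dims2 dv in simp)
  have y2u: "y2 = Sci *\<^sub>v u"
    unfolding Scy[symmetric] using dims dims2 dv by (simp add: mvassoc[symmetric] SciSc mv_one)
  have "qform x Mi x = conjugate x \<bullet> y" unfolding qform_alt y_def ..
  also have "\<dots> = conjugate x \<bullet> (P2 *\<^sub>v y2) + conjugate x \<bullet> (P3 *\<^sub>v y3)"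
    unfolding ydec using dims dv x by (simp add: sp_add_r)
  also have "\<dots> = conjugate x2 \<bullet> y2 + conjugate x3 \<bullet> y3"
    unfolding x2_def x3_def P2a_def P3a_def using dims dv x by (simp add: sprod_adj')
  also have "conjugate x3 \<bullet> y3 = conjugate x3 \<bullet> (Di *\<^sub>v x3) - conjugate (B * Di *\<^sub>v x3) \<bullet> y2"
  proof -
    have "conjugate x3 \<bullet> y3 = conjugate x3 \<bullet> (Di *\<^sub>v x3) - conjugate x3 \<bullet> ((Di * C) *\<^sub>v y2)"
      unfolding y3eq using dims dims2 dv by (simp add: sp_minus_r mvassoc)
    also have "conjugate x3 \<bullet> ((Di * C) *\<^sub>v y2) = conjugate (mat_adjoint (Di * C) *\<^sub>v x3) \<bullet> y2"
      using dims dims2 dv by (simp add: sprod_adj')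
    also have "mat_adjoint (Di * C) = B * Di"
      using adj_mult[of Di b b C a] dims dims2 CH DiH by (auto intro: carrier_matI)
    finally show ?thesis .
  qed
  also have "conjugate x2 \<bullet> y2 + (conjugate x3 \<bullet> (Di *\<^sub>v x3) - conjugate (B * Di *\<^sub>v x3) \<bullet> y2)
     = (conjugate x2 \<bullet> y2 - conjugate (B * Di *\<^sub>v x3) \<bullet> y2) + conjugate x3 \<bullet> (Di *\<^sub>v x3)"
    by (simp add: algebra_simps)
  also have "conjugate x2 \<bullet> y2 - conjugate (B * Di *\<^sub>v x3) \<bullet> y2 = conjugate u \<bullet> y2"
    unfolding u_def using dims dims2 dv by (simp add: conj_minus sp_minus_l)
  also have "conjugate u \<bullet> y2 = qform u Sci u" unfolding qform_alt y2u ..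
  finally show ?thesis unfolding qform_alt[symmetric] u_def x2_def x3_def B_def P2a_def P3a_def .
qed




lemma sc_ker:
  fixes M Mi P2 P3 Di :: "complex mat" and v :: "complex vec"
  assumes M: "M \<in> carrier_mat n n" and Mi: "Mi \<in> carrier_mat n n" and MiM: "Mi * M = 1\<^sub>m n"
    and P2: "P2 \<in> carrier_mat n a" and P3: "P3 \<in> carrier_mat n b"
    and P22: "mat_adjoint P2 * P2 = 1\<^sub>m a" and P23: "mat_adjoint P2 * P3 = 0\<^sub>m a b"
    and split: "P2 * mat_adjoint P2 + P3 * mat_adjoint P3 = 1\<^sub>m n"
    and Di: "Di \<in> carrier_mat b b" and DDi: "mat_adjoint P3 * M * P3 * Di = 1\<^sub>m b"
    and v: "dim_vec v = a"
    and Sv: "(mat_adjoint P2 * M * P2 - mat_adjoint P2 * M * P3 * Di * (mat_adjoint P3 * M * P2)) *\<^sub>v v = 0\<^sub>v a"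
  shows "v = 0\<^sub>v a"
proof -
  define P2a where "P2a = mat_adjoint P2"
  define P3a where "P3a = mat_adjoint P3"
  have dims: "dim_row M = n" "dim_col M = n" "dim_row Mi = n" "dim_col Mi = n"
    "dim_row P2 = n" "dim_col P2 = a" "dim_row P3 = n" "dim_col P3 = b"
    "dim_row P2a = a" "dim_col P2a = n" "dim_row P3a = b" "dim_col P3a = n"
    "dim_row Di = b" "dim_col Di = b"
    using M Mi P2 P3 Di unfolding P2a_def P3a_def by auto
  note split = split[folded P2a_def, folded P3a_def]
  note DDi = DDi[folded P3a_def] and P22 = P22[folded P2a_def] and P23 = P23[folded P2a_def]
  note Sv = Sv[folded P2a_def, folded P3a_def]
  define y where "y = P2 *\<^sub>v v - P3 *\<^sub>v (Di *\<^sub>v (P3a * M * P2 *\<^sub>v v))"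
  have dy: "dim_vec y = n" unfolding y_def using dims by simp
  have e2: "P2a *\<^sub>v (M *\<^sub>v y) = 0\<^sub>v a"
  proof -
    have "P2a *\<^sub>v (M *\<^sub>v y) = (P2a * M * P2 - P2a * M * P3 * Di * (P3a * M * P2)) *\<^sub>v v"
      unfolding y_def using dims v by (simp add: mv_dist_minus mv_minus_dist mvassoc)
    thus ?thesis using Sv by simp
  qed
  have e3: "P3a *\<^sub>v (M *\<^sub>v y) = 0\<^sub>v b"
  proof -
    have "P3a *\<^sub>v (M *\<^sub>v y) = (P3a * M * P2) *\<^sub>v v - (P3a * M * P3 * Di) *\<^sub>v ((P3a * M * P2) *\<^sub>v v)"
      unfolding y_def using dims v by (simp add: mv_dist_minus mvassoc)
    also have "\<dots> = 0\<^sub>v b" unfolding DDi using dims v by (intro eq_vecI) (auto simp: mv_one)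
    finally show ?thesis .
  qed
  have My: "M *\<^sub>v y = 0\<^sub>v n"
  proof -
    have "M *\<^sub>v y = 1\<^sub>m n *\<^sub>v (M *\<^sub>v y)" using dims by (simp add: mv_one)
    also have "\<dots> = P2 *\<^sub>v (P2a *\<^sub>v (M *\<^sub>v y)) + P3 *\<^sub>v (P3a *\<^sub>v (M *\<^sub>v y))"
      unfolding split[symmetric] using dims dy by (simp add: mv_add_dist mvassoc)
    also have "\<dots> = 0\<^sub>v n" unfolding e2 e3 using dims by (intro eq_vecI) (auto simp: mv_zerov)
    finally show ?thesis .
  qed
  have y0: "y = 0\<^sub>v n"
  proof -
    have "y = (Mi * M) *\<^sub>v y" unfolding MiM using dy by (simp add: mv_one)
    also have "\<dots> = 0\<^sub>v n" using dims dy My by (simp add: mvassoc mv_zerov)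
    finally show ?thesis .
  qed
  have "v = P2a *\<^sub>v y"
  proof -
    have "P2a *\<^sub>v y = (P2a * P2) *\<^sub>v v - (P2a * P3) *\<^sub>v (Di *\<^sub>v (P3a * M * P2 *\<^sub>v v))"
      unfolding y_def using dims v by (simp add: mv_dist_minus mvassoc)
    also have "\<dots> = v" unfolding P22 P23 using dims v by (intro eq_vecI) (auto simp: mv_one mv_zero)
    finally show ?thesis by simp
  qed
  thus ?thesis unfolding y0 using dims by (simp add: mv_zerov)
qed

lemma cge0_iff: "(0::complex) \<le> z \<longleftrightarrow> Im z = 0 \<and> 0 \<le> Re z"
  by (auto simp: less_eq_complex_def)

lemma inv_psd:
  fixes M Mi :: "complex mat" and x :: "complex vec"
  assumes M: "M \<in> carrier_mat n n" and MH: "mat_adjoint M = M" and Mi: "Mi \<in> carrier_mat n n"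
    and MMi: "M * Mi = 1\<^sub>m n"
    and psd: "\<And>w. dim_vec w = n \<Longrightarrow> 0 \<le> qform w M w" and x: "dim_vec x = n"
  shows "0 \<le> qform x Mi x"
proof -
  define w where "w = Mi *\<^sub>v x"
  have dw: "dim_vec w = n" unfolding w_def using Mi by simp
  have Mw: "M *\<^sub>v w = x" unfolding w_def using M Mi x by (simp add: mvassoc[symmetric] MMi mv_one)
  have "qform x Mi x = conjugate x \<bullet> w" unfolding qform_alt w_def ..
  also have "\<dots> = conjugate (M *\<^sub>v w) \<bullet> w" by (simp only: Mw)
  also have "\<dots> = conjugate w \<bullet> (M *\<^sub>v w)" using sprod_adj'[of w M w] M dw MH by simp
  also have "\<dots> = qform w M w" unfolding qform_alt ..
  finally show ?thesis using psd[OF dw] by simp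
qed

lemma pd_nonneg: assumes S: "(S::complex mat) \<in> carrier_mat n n" and pd: "pos_def_mat S"
  and w: "dim_vec w = n" shows "0 \<le> qform w S w"
proof (cases "w = 0\<^sub>v n")
  case True thus ?thesis unfolding qform_alt using S by simp
next
  case False
  hence "qform w S w \<in> \<real> \<and> 0 < Re (qform w S w)" using pd S w unfolding pos_def_mat_def
    by (auto intro: carrier_vecI)
  thus ?thesis unfolding cge0_iff by (auto elim: Reals_cases)
qed

lemma compress_props:
  fixes M E :: "complex mat"
  assumes M: "M \<in> carrier_mat N N" and pd: "pos_def_mat M" and E: "E \<in> carrier_mat N k"
    and EE: "mat_adjoint E * E = 1\<^sub>m k"
  shows "mat_inv (mat_adjoint E * M * E) \<in> carrier_mat k k"
    "(mat_adjoint E * M * E) * mat_inv (mat_adjoint E * M * E) = 1\<^sub>m k"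
    "mat_inv (mat_adjoint E * M * E) * (mat_adjoint E * M * E) = 1\<^sub>m k"
    "mat_adjoint (mat_adjoint E * M * E) = mat_adjoint E * M * E"
    "\<And>w. dim_vec w = k \<Longrightarrow> 0 \<le> qform w (mat_adjoint E * M * E) w"
proof -
  have G: "mat_adjoint E * M * E \<in> carrier_mat k k" using M E by auto
  have q: "qform w (mat_adjoint E * M * E) w = qform (E *\<^sub>v w) M (E *\<^sub>v w)" if "dim_vec w = k" for w
    using qform_compress[of E M w] M E that by auto
  have ker: "v = 0\<^sub>v k" if v: "v \<in> carrier_vec k" "(mat_adjoint E * M * E) *\<^sub>v v = 0\<^sub>v k" for v
  proof (rule ker_from_qform[OF G _ v])
    fix w :: "complex vec" assume w: "w \<in> carrier_vec k" "w \<noteq> 0\<^sub>v k"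
    have Ew: "E *\<^sub>v w \<noteq> 0\<^sub>v N"
    proof
      assume "E *\<^sub>v w = 0\<^sub>v N"
      hence "(mat_adjoint E * E) *\<^sub>v w = 0\<^sub>v k" using E w by (simp add: mvassoc mv_zerov)
      hence "w = 0\<^sub>v k" unfolding EE using w by (simp add: mv_one)
      thus False using w by simp
    qed
    have "0 < Re (qform (E *\<^sub>v w) M (E *\<^sub>v w))" using pd M E w Ew unfolding pos_def_mat_def by auto
    thus "qform w (mat_adjoint E * M * E) w \<noteq> 0" using q[of w] w by auto
  qed
  from mat_inv_props[OF G ker]
  show "mat_inv (mat_adjoint E * M * E) \<in> carrier_mat k k"
    "(mat_adjoint E * M * E) * mat_inv (mat_adjoint E * M * E) = 1\<^sub>m k"
    "mat_inv (mat_adjoint E * M * E) * (mat_adjoint E * M * E) = 1\<^sub>m k" by auto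
  show "mat_adjoint (mat_adjoint E * M * E) = mat_adjoint E * M * E"
    using M E pd_hermitian[OF pd] by (simp add: adj3)
  show "\<And>w. dim_vec w = k \<Longrightarrow> 0 \<le> qform w (mat_adjoint E * M * E) w"
    using q pd_nonneg[OF M pd] E by auto
qed




lemma mult_unit0: assumes "(A::complex mat) \<in> carrier_mat n m" "j < m"
  shows "A *\<^sub>v unit_vec m j = col A j"
proof (rule eq_vecI)
  fix i assume "i < dim_vec (col A j)"
  hence i: "i < n" using assms by simp
  have "(A *\<^sub>v unit_vec m j) $ i = (\<Sum>l<m. A $$ (i, l) * (if l = j then 1 else 0))"
    using assms i by (auto simp: scalar_prod_def lessThan_atLeast0 intro!: sum.cong)
  also have "\<dots> = A $$ (i, j)" unfolding sum_ind_right using assms by simp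
  finally show "(A *\<^sub>v unit_vec m j) $ i = col A j $ i" using i assms by simp
qed (use assms in simp)

lemma eig_exists: assumes A: "(A::complex mat) \<in> carrier_mat n n" and n: "0 < n"
  shows "\<exists>lam v. v \<in> carrier_vec n \<and> v \<noteq> 0\<^sub>v n \<and> A *\<^sub>v v = lam \<cdot>\<^sub>v v"
proof -
  obtain as where cp: "char_poly A = (\<Prod>a\<leftarrow>as. [:- a, 1:])" and len: "length as = n"
    using char_poly_factorized[OF A] by blast
  from len n obtain a where a: "a \<in> set as" by (cases as) auto
  have "poly (char_poly A) a = 0" unfolding cp by (rule linear_poly_root[OF a])
  hence "eigenvalue A a" using eigenvalue_root_char_poly[OF A] by simp
  then obtain v where "eigenvector A v a" unfolding eigenvalue_def by blast
  thus ?thesis unfolding eigenvector_def using A by auto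
qed

lemma unitary_ext: assumes v: "(v::complex vec) \<in> carrier_vec n" and v0: "v \<noteq> 0\<^sub>v n"
  shows "\<exists>U c. U \<in> carrier_mat n n \<and> mat_adjoint U * U = 1\<^sub>m n \<and> U * mat_adjoint U = 1\<^sub>m n
     \<and> 0 < n \<and> U *\<^sub>v unit_vec n 0 = c \<cdot>\<^sub>v v"
proof -
  have n: "0 < n" using v v0 by (cases n) auto
  interpret cof_vec_space n "TYPE(complex)" .
  define b where "b = basis_completion v"
  define ws where "ws = gram_schmidt n b"
  from basis_completion[OF v v0, folded b_def]
  have dist_b: "distinct b" and indep: "\<not> lin_dep (set b)" and b: "set b \<subseteq> carrier_vec n"
    and hdb: "hd b = v" and len_b: "length b = n" by auto
  from hdb len_b n obtain vs where bv: "b = v # vs" by (cases b, auto)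
  from gram_schmidt_result[OF b dist_b indep refl, folded ws_def]
  have ws: "set ws \<subseteq> carrier_vec n" "corthogonal ws" "length ws = n"
    by (auto simp: len_b)
  from gram_schmidt_hd[OF v, of vs, folded bv] have hdws: "hd ws = v" unfolding ws_def .
  define nrm :: "complex vec \<Rightarrow> complex" where "nrm w = complex_of_real (1 / sqrt (Re (w \<bullet>c w)))" for w
  define us where "us = map (\<lambda>w. nrm w \<cdot>\<^sub>v w) ws"
  define U where "U = mat_of_cols n us"
  have lus: "length us = n" unfolding us_def using ws by simp
  have usi: "us ! i = nrm (ws ! i) \<cdot>\<^sub>v ws ! i" if "i < n" for i unfolding us_def using that ws by simp
  have wsc: "ws ! i \<in> carrier_vec n" if "i < n" for i using ws that by auto
  have usc: "us ! i \<in> carrier_vec n" if "i < n" for i using usi[OF that] wsc[OF that] by simp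
  have U: "U \<in> carrier_mat n n" unfolding U_def using mat_of_cols_carrier(1)[of n us] lus by simp
  have colU: "col U i = us ! i" if "i < n" for i unfolding U_def using col_mat_of_cols[of i us n] lus usc that by simp
  have wsq: "ws ! i \<bullet>c ws ! i = complex_of_real (Re (ws ! i \<bullet>c ws ! i)) \<and> 0 < Re (ws ! i \<bullet>c ws ! i)" if "i < n" for i
  proof -
    have ge: "0 \<le> ws ! i \<bullet>c ws ! i" by (rule conjugate_square_ge_0_vec)
    have ne: "ws ! i \<bullet>c ws ! i \<noteq> 0" using ws(2) that ws(3) unfolding corthogonal_def by auto
    from ge ne show ?thesis unfolding cge0_iff by (auto simp: complex_eq_iff)
  qed
  have inner: "conjugate (us ! i) \<bullet> (us ! j) = (if i = j then 1 else 0)" if "i < n" "j < n" for i j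
  proof -
    have rn: "cnj (nrm w) = nrm w" for w unfolding nrm_def by simp
    have "conjugate (us ! i) \<bullet> (us ! j) = nrm (ws ! i) * nrm (ws ! j) * (conjugate (ws ! i) \<bullet> ws ! j)"
      unfolding usi[OF that(1)] usi[OF that(2)] conjugate_smult_vec using wsc[OF that(1)] wsc[OF that(2)]
      by (simp add: scalar_prod_smult_left scalar_prod_smult_right rn carrier_vecD)
    also have "conjugate (ws ! i) \<bullet> ws ! j = ws ! j \<bullet>c ws ! i"
      using conjugate_vec_sprod_comm[of "ws ! j" n "ws ! i"] wsc that by simp
    finally have eq: "conjugate (us ! i) \<bullet> (us ! j) = nrm (ws ! i) * nrm (ws ! j) * (ws ! j \<bullet>c ws ! i)" .
    show ?thesis
    proof (cases "i = j")
      case True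
      have "nrm (ws ! i) * nrm (ws ! i) * (ws ! i \<bullet>c ws ! i) = 1"
      proof -
        define s where "s = Re (ws ! i \<bullet>c ws ! i)"
        have s: "0 < s" "ws ! i \<bullet>c ws ! i = complex_of_real s" using wsq[OF that(1)] unfolding s_def by auto
        have ss: "sqrt s * sqrt s = s" using s by simp
        have "1 / sqrt s * (1 / sqrt s) * s = 1" using s ss by (simp add: field_simps)
        hence "complex_of_real (1 / sqrt s * (1 / sqrt s) * s) = 1" by simp
        thus ?thesis unfolding nrm_def s_def[symmetric] s(2) Re_complex_of_real by (simp only: of_real_mult)
      qed
      thus ?thesis using eq True by simp
    next
      case False
      hence "ws ! j \<bullet>c ws ! i = 0" using ws(2) ws(3) that unfolding corthogonal_def by auto
      thus ?thesis using eq False by simp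
    qed
  qed
  have UU: "mat_adjoint U * U = 1\<^sub>m n"
  proof (rule eq_matI)
    fix i j assume "i < dim_row (1\<^sub>m n :: complex mat)" "j < dim_col (1\<^sub>m n :: complex mat)"
    hence ij: "i < n" "j < n" by auto
    have "(mat_adjoint U * U) $$ (i, j) = conjugate (col U i) \<bullet> col U j"
      using U ij by (auto simp: scalar_prod_def intro!: sum.cong)
    also have "\<dots> = (if i = j then 1 else 0)" unfolding colU[OF ij(1)] colU[OF ij(2)] using inner[OF ij] .
    finally show "(mat_adjoint U * U) $$ (i, j) = 1\<^sub>m n $$ (i, j)" using ij by simp
  qed (use U in auto)
  have UU2: "U * mat_adjoint U = 1\<^sub>m n" using mat_mult_left_right_inverse[OF adj_carrier[OF U] U UU] .
  have "U *\<^sub>v unit_vec n 0 = nrm v \<cdot>\<^sub>v v"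
    using mult_unit0[OF U n] colU[OF n] usi[OF n] hdws ws(3) n by (cases ws) auto
  thus ?thesis using U UU UU2 n by blast
qed




lemma pd_compress:
  fixes M E :: "complex mat"
  assumes M: "M \<in> carrier_mat N N" and pd: "pos_def_mat M" and E: "E \<in> carrier_mat N k"
    and EE: "mat_adjoint E * E = 1\<^sub>m k"
  shows "pos_def_mat (mat_adjoint E * M * E)"
proof -
  have G: "mat_adjoint E * M * E \<in> carrier_mat k k" using M E by auto
  have q: "qform w (mat_adjoint E * M * E) w = qform (E *\<^sub>v w) M (E *\<^sub>v w)" if "dim_vec w = k" for w
    using qform_compress[of E M w] M E that by auto
  have H: "mat_adjoint (mat_adjoint E * M * E) = mat_adjoint E * M * E"
    using M E pd_hermitian[OF pd] by (simp add: adj3)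
  have "qform w (mat_adjoint E * M * E) w \<in> \<real> \<and> 0 < Re (qform w (mat_adjoint E * M * E) w)"
    if w: "w \<in> carrier_vec k" "w \<noteq> 0\<^sub>v k" for w
  proof -
    have Ew: "E *\<^sub>v w \<noteq> 0\<^sub>v N"
    proof
      assume "E *\<^sub>v w = 0\<^sub>v N"
      hence "(mat_adjoint E * E) *\<^sub>v w = 0\<^sub>v k" using E w by (simp add: mvassoc mv_zerov)
      hence "w = 0\<^sub>v k" unfolding EE using w by (simp add: mv_one)
      thus False using w by simp
    qed
    have "qform (E *\<^sub>v w) M (E *\<^sub>v w) \<in> \<real> \<and> 0 < Re (qform (E *\<^sub>v w) M (E *\<^sub>v w))"
      using pd M E w Ew unfolding pos_def_mat_def by auto
    thus ?thesis using q[of w] w by auto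
  qed
  thus ?thesis unfolding pos_def_mat_def hermitian_mat_def using G H by auto
qed

lemma blockdiag_facts:
  fixes R4 :: "complex mat" and s :: real
  assumes R4: "R4 \<in> carrier_mat k k" and pd4: "pos_def_mat R4" and s: "0 < s"
  defines "R' \<equiv> mat (Suc k) (Suc k) (\<lambda>(i, j). if i = 0 \<and> j = 0 then complex_of_real s
      else if i = 0 \<or> j = 0 then 0 else R4 $$ (i - 1, j - 1))"
  shows "pos_def_mat R'"
proof -
  have RC: "R' \<in> carrier_mat (Suc k) (Suc k)" unfolding R'_def by simp
  have R4H: "mat_adjoint R4 = R4" using pd_hermitian[OF pd4] .
  have R4e: "cnj (R4 $$ (j, i)) = R4 $$ (i, j)" if "i < k" "j < k" for i j
    using arg_cong[OF R4H, of "\<lambda>M. M $$ (i, j)"] that R4 by simp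
  have H: "mat_adjoint R' = R'"
    by (rule eq_matI) (auto simp: R'_def R4e)
  have q: "qform w R' w = complex_of_real s * (cnj (w $ 0) * w $ 0) + qform (vec k (\<lambda>i. w $ Suc i)) R4 (vec k (\<lambda>i. w $ Suc i))"
    if w: "dim_vec w = Suc k" for w
  proof -
    define w' where "w' = vec k (\<lambda>i. w $ Suc i)"
    have "qform w R' w = (\<Sum>i<Suc k. cnj (w $ i) * (\<Sum>j<Suc k. R' $$ (i, j) * w $ j))"
      unfolding qform_alt using w RC by (auto simp: scalar_prod_def lessThan_atLeast0 intro!: sum.cong)
    also have "\<dots> = cnj (w $ 0) * (complex_of_real s * w $ 0) +
        (\<Sum>i<k. cnj (w $ Suc i) * (\<Sum>j<k. R4 $$ (i, j) * w $ Suc j))"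
      unfolding sum.lessThan_Suc_shift by (simp add: R'_def)
    also have "(\<Sum>i<k. cnj (w $ Suc i) * (\<Sum>j<k. R4 $$ (i, j) * w $ Suc j)) = qform w' R4 w'"
      unfolding qform_alt w'_def using R4 by (auto simp: scalar_prod_def lessThan_atLeast0 intro!: sum.cong)
    finally show ?thesis unfolding w'_def by (simp add: algebra_simps)
  qed
  have pos: "qform w R' w \<in> \<real> \<and> 0 < Re (qform w R' w)" if w: "w \<in> carrier_vec (Suc k)" "w \<noteq> 0\<^sub>v (Suc k)" for w
  proof -
    define w' where "w' = vec k (\<lambda>i. w $ Suc i)"
    have dw: "dim_vec w = Suc k" using w by simp
    have a: "cnj (w $ 0) * w $ 0 = complex_of_real ((Re (w $ 0))\<^sup>2 + (Im (w $ 0))\<^sup>2)"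
      using complex_mult_cnj[of "w $ 0"] by (simp add: mult.commute)
    have q4: "qform w' R4 w' \<in> \<real> \<and> 0 \<le> Re (qform w' R4 w')"
    proof (cases "w' = 0\<^sub>v k")
      case True thus ?thesis unfolding qform_alt using R4 by simp
    next
      case False thus ?thesis using pd4 R4 unfolding pos_def_mat_def w'_def by auto
    qed
    obtain r4 where r4: "qform w' R4 w' = complex_of_real r4" "0 \<le> r4"
      using q4 by (auto elim!: Reals_cases)
    define c0 where "c0 = s * ((Re (w $ 0))\<^sup>2 + (Im (w $ 0))\<^sup>2)"
    have c0: "0 \<le> c0" unfolding c0_def using s by auto
    have qe: "qform w R' w = complex_of_real (c0 + r4)"
      using q[OF dw] a r4(1) unfolding w'_def c0_def by simp
    have "0 < c0 \<or> 0 < r4"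
    proof (cases "w $ 0 = 0")
      case True
      have "w' \<noteq> 0\<^sub>v k"
      proof
        assume "w' = 0\<^sub>v k"
        have "w = 0\<^sub>v (Suc k)"
        proof (rule eq_vecI)
          fix i assume "i < dim_vec (0\<^sub>v (Suc k) :: complex vec)"
          hence i: "i < Suc k" by simp
          show "w $ i = 0\<^sub>v (Suc k) $ i"
          proof (cases i)
            case 0 thus ?thesis using True by simp
          next
            case (Suc j)
            hence j: "j < k" using i by simp
            have "w' $ j = 0" using \<open>w' = 0\<^sub>v k\<close> j by simp
            thus ?thesis using Suc j unfolding w'_def by simp
          qed
        qed (use dw in simp)
        thus False using w by simp
      qed
      hence "0 < Re (qform w' R4 w')" using pd4 R4 unfolding pos_def_mat_def w'_def by auto
      thus ?thesis using r4 by simp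
    next
      case False
      hence "0 < (Re (w $ 0))\<^sup>2 + (Im (w $ 0))\<^sup>2" by (simp add: complex_eq_iff sum_power2_gt_zero_iff)
      thus ?thesis using s unfolding c0_def by auto
    qed
    thus ?thesis unfolding qe using c0 r4(2) by auto
  qed
  show ?thesis unfolding pos_def_mat_def hermitian_mat_def using RC H pos by auto
qed




lemma blockdiag_square:
  fixes R4 B :: "complex mat" and s :: real
  assumes R4: "R4 \<in> carrier_mat k k" and B: "B \<in> carrier_mat (Suc k) (Suc k)"
    and RR: "\<And>i j. i < k \<Longrightarrow> j < k \<Longrightarrow> (R4 * R4) $$ (i, j) = B $$ (Suc i, Suc j)"
    and B00: "B $$ (0, 0) = complex_of_real (s * s)"
    and B0j: "\<And>j. j < k \<Longrightarrow> B $$ (0, Suc j) = 0"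
    and Bi0: "\<And>i. i < k \<Longrightarrow> B $$ (Suc i, 0) = 0"
  defines "R' \<equiv> mat (Suc k) (Suc k) (\<lambda>(i, j). if i = 0 \<and> j = 0 then complex_of_real s
      else if i = 0 \<or> j = 0 then 0 else R4 $$ (i - 1, j - 1))"
  shows "R' * R' = B"
proof (rule eq_matI)
  fix i j assume "i < dim_row B" "j < dim_col B"
  hence ij: "i < Suc k" "j < Suc k" using B by auto
  have e: "(R' * R') $$ (i, j) = (\<Sum>l<Suc k. R' $$ (i, l) * R' $$ (l, j))"
    using ij unfolding R'_def by (auto simp: scalar_prod_def lessThan_atLeast0 intro!: sum.cong)
  also have "\<dots> = R' $$ (i, 0) * R' $$ (0, j) + (\<Sum>l<k. R' $$ (i, Suc l) * R' $$ (Suc l, j))"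
    unfolding sum.lessThan_Suc_shift ..
  also have "\<dots> = B $$ (i, j)"
  proof (cases i)
    case 0
    show ?thesis
    proof (cases j)
      case 0 thus ?thesis using \<open>i = 0\<close> B00 unfolding R'_def by simp
    next
      case (Suc j') thus ?thesis using \<open>i = 0\<close> B0j ij unfolding R'_def by simp
    qed
  next
    case (Suc i')
    show ?thesis
    proof (cases j)
      case 0 thus ?thesis using Suc Bi0 ij unfolding R'_def by simp
    next
      case (Suc j')
      have "(\<Sum>l<k. R' $$ (i, Suc l) * R' $$ (Suc l, j)) = (\<Sum>l<k. R4 $$ (i', l) * R4 $$ (l, j'))"
        using \<open>i = Suc i'\<close> Suc ij unfolding R'_def by (auto intro!: sum.cong)
      also have "\<dots> = (R4 * R4) $$ (i', j')"
        using R4 \<open>i = Suc i'\<close> Suc ij by (auto simp: scalar_prod_def lessThan_atLeast0 intro!: sum.cong)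
      also have "\<dots> = B $$ (i, j)" using RR[of i' j'] \<open>i = Suc i'\<close> Suc ij by simp
      finally show ?thesis using \<open>i = Suc i'\<close> Suc ij unfolding R'_def by simp
    qed
  qed
  finally show "(R' * R') $$ (i, j) = B $$ (i, j)" .
qed (use B in \<open>auto simp: R'_def\<close>)




lemma sqrt_exists: "(A::complex mat) \<in> carrier_mat n n \<Longrightarrow> pos_def_mat A \<Longrightarrow>
   \<exists>R. R \<in> carrier_mat n n \<and> pos_def_mat R \<and> R * R = A"
proof (induction n arbitrary: A)
  case 0
  have "A * A = A" using 0 by (intro eq_matI) auto
  thus ?case using 0 by blast
next
  case (Suc k)
  note A = Suc.prems(1) and pd = Suc.prems(2)
  define n where "n = Suc k"
  have An: "A \<in> carrier_mat n n" using A n_def by simp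
  have AH: "mat_adjoint A = A" using pd_hermitian[OF pd] .
  obtain lam v where v: "v \<in> carrier_vec n" "v \<noteq> 0\<^sub>v n" "A *\<^sub>v v = lam \<cdot>\<^sub>v v"
    using eig_exists[OF An] n_def by auto
  obtain U c where U: "U \<in> carrier_mat n n" and UU: "mat_adjoint U * U = 1\<^sub>m n"
    and UU2: "U * mat_adjoint U = 1\<^sub>m n" and Ue: "U *\<^sub>v unit_vec n 0 = c \<cdot>\<^sub>v v"
    using unitary_ext[OF v(1,2)] by blast
  define e0 :: "complex vec" where "e0 = unit_vec n 0"
  have de0: "dim_vec e0 = n" unfolding e0_def by simp
  have AUe: "A *\<^sub>v (U *\<^sub>v e0) = lam \<cdot>\<^sub>v (U *\<^sub>v e0)"
  proof -
    have "A *\<^sub>v (U *\<^sub>v e0) = c \<cdot>\<^sub>v (A *\<^sub>v v)" unfolding e0_def Ue using mult_mat_vec[OF An v(1)] .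
    also have "\<dots> = lam \<cdot>\<^sub>v (U *\<^sub>v e0)" unfolding v(3) e0_def Ue by (intro eq_vecI) auto
    finally show ?thesis .
  qed
  define B where "B = mat_adjoint U * A * U"
  have Bc: "B \<in> carrier_mat n n" unfolding B_def using U An by auto
  have BH: "mat_adjoint B = B" unfolding B_def using U An AH by (simp add: adj3)
  have Be0: "B *\<^sub>v e0 = lam \<cdot>\<^sub>v e0"
  proof -
    have "B *\<^sub>v e0 = mat_adjoint U *\<^sub>v (A *\<^sub>v (U *\<^sub>v e0))" unfolding B_def using U An de0 by (simp add: mvassoc)
    also have "\<dots> = lam \<cdot>\<^sub>v (mat_adjoint U *\<^sub>v (U *\<^sub>v e0))" unfolding AUe
      by (rule mult_mat_vec[OF adj_carrier[OF U]]) (use U de0 in \<open>auto intro: carrier_vecI\<close>)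
    also have "mat_adjoint U *\<^sub>v (U *\<^sub>v e0) = e0" using U de0 by (simp add: mvassoc[symmetric] UU mv_one)
    finally show ?thesis .
  qed
  have Bcol: "B $$ (i, 0) = (if i = 0 then lam else 0)" if "i < n" for i
  proof -
    have "B *\<^sub>v e0 = col B 0" unfolding e0_def using mult_unit0[OF Bc] n_def by simp
    moreover have "B $$ (i, 0) = col B 0 $ i" using that Bc n_def by simp
    ultimately have "B $$ (i, 0) = (lam \<cdot>\<^sub>v e0) $ i" using Be0 by simp
    thus ?thesis using that unfolding e0_def by simp
  qed
  have Brow: "B $$ (0, j) = 0" if "0 < j" "j < n" for j
  proof -
    have "B $$ (0, j) = mat_adjoint B $$ (0, j)" using BH by simp
    also have "\<dots> = cnj (B $$ (j, 0))" using Bc that by simp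
    finally show ?thesis using Bcol[OF that(2)] that by simp
  qed
  have Bpd: "pos_def_mat B" unfolding B_def by (rule pd_compress[OF An pd U UU])
  have lam: "lam \<in> \<real> \<and> 0 < Re lam"
  proof -
    have "qform e0 B e0 = lam"
    proof -
      have "qform e0 B e0 = (\<Sum>i<n. cnj (e0 $ i) * (lam * e0 $ i))"
        unfolding qform_alt Be0 using de0 by (auto simp: scalar_prod_def lessThan_atLeast0 intro!: sum.cong)
      also have "\<dots> = (\<Sum>i<n. (if i = 0 then 1 else 0) * lam)"
        unfolding e0_def by (intro sum.cong) auto
      also have "\<dots> = lam" unfolding sum_ind_left n_def by simp
      finally show ?thesis .
    qed
    moreover have "e0 \<noteq> 0\<^sub>v n" unfolding e0_def n_def by simp
    ultimately show ?thesis using Bpd Bc de0 unfolding pos_def_mat_def by (auto intro: carrier_vecI)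
  qed
  define s where "s = sqrt (Re lam)"
  have s: "0 < s" unfolding s_def using lam by simp
  have lams: "lam = complex_of_real (s * s)" unfolding s_def using lam by (auto elim!: Reals_cases)
  define Q where "Q = sel n 1 k"
  have Qc: "Q \<in> carrier_mat n k" unfolding Q_def by simp
  have QQ: "mat_adjoint Q * Q = 1\<^sub>m k" unfolding Q_def n_def by (rule adj_sel_same) simp
  define B4 where "B4 = mat_adjoint Q * B * Q"
  have B4c: "B4 \<in> carrier_mat k k" unfolding B4_def using Qc Bc by auto
  have B4pd: "pos_def_mat B4" unfolding B4_def by (rule pd_compress[OF Bc Bpd Qc QQ])
  have B4e: "B4 $$ (i, j) = B $$ (Suc i, Suc j)" if "i < k" "j < k" for i j
  proof -
    have "B4 = subblock B 1 k 1 k" unfolding B4_def Q_def using subblock_sel[OF Bc] n_def by simp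
    thus ?thesis using that unfolding subblock_def by simp
  qed
  obtain R4 where R4: "R4 \<in> carrier_mat k k" "pos_def_mat R4" "R4 * R4 = B4"
    using Suc.IH[OF B4c B4pd] by blast
  define R' where "R' \<equiv> mat (Suc k) (Suc k) (\<lambda>(i, j). if i = 0 \<and> j = 0 then complex_of_real s
      else if i = 0 \<or> j = 0 then 0 else R4 $$ (i - 1, j - 1))"
  have R'c: "R' \<in> carrier_mat n n" unfolding R'_def n_def by simp
  have R'pd: "pos_def_mat R'" unfolding R'_def by (rule blockdiag_facts[OF R4(1,2) s])
  have R'sq: "R' * R' = B" unfolding R'_def
  proof (rule blockdiag_square[OF R4(1)])
    show "B \<in> carrier_mat (Suc k) (Suc k)" using Bc n_def by simp
    show "\<And>i j. i < k \<Longrightarrow> j < k \<Longrightarrow> (R4 * R4) $$ (i, j) = B $$ (Suc i, Suc j)" using R4(3) B4e by simp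
    show "B $$ (0, 0) = complex_of_real (s * s)" using Bcol[of 0] lams n_def by simp
    show "\<And>j. j < k \<Longrightarrow> B $$ (0, Suc j) = 0" using Brow n_def by simp
    show "\<And>i. i < k \<Longrightarrow> B $$ (Suc i, 0) = 0" using Bcol n_def by simp
  qed
  define R where "R = U * R' * mat_adjoint U"
  have Rc: "R \<in> carrier_mat n n" unfolding R_def using U R'c by auto
  have Rpd: "pos_def_mat R"
  proof -
    have "pos_def_mat (mat_adjoint (mat_adjoint U) * R' * mat_adjoint U)"
      by (rule pd_compress[OF R'c R'pd adj_carrier[OF U]]) (simp add: UU2)
    thus ?thesis unfolding R_def by simp
  qed
  have RR: "R * R = A"
  proof -
    have dims: "dim_row U = n" "dim_col U = n" "dim_row R' = n" "dim_col R' = n" "dim_row A = n" "dim_col A = n"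
      using U R'c An by auto
    have "R * R = U * (R' * (mat_adjoint U * U) * R') * mat_adjoint U"
      unfolding R_def using dims by (simp add: massoc)
    also have "\<dots> = U * B * mat_adjoint U" unfolding UU R'sq[symmetric] using dims by (simp add: mone_r)
    also have "\<dots> = (U * mat_adjoint U) * A * (U * mat_adjoint U)" unfolding B_def using dims by (simp add: massoc)
    also have "\<dots> = A" unfolding UU2 using dims by (simp add: mone_l mone_r)
    finally show ?thesis .
  qed
  show ?case using Rc Rpd RR n_def by blast
qed




lemma final_arith: assumes a: "0 \<le> (a::complex)" and b: "0 \<le> (b::complex)"
  shows "a + b = (1 - 1 / (1 + a / (1 + b)) * (1 / (1 + b))) / (1 / (1 + a / (1 + b)) * (1 / (1 + b)))
    \<and> b = (1 - 1 / (1 + b)) / (1 / (1 + b))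
    \<and> (1 + (a + b)) / (1 + b) = 1 / (1 / (1 + a / (1 + b)))"
proof -
  obtain a' b' where ab: "a = complex_of_real a'" "b = complex_of_real b'" "0 \<le> a'" "0 \<le> b'"
    using a b unfolding cge0_iff by (metis complex_eq_iff of_real_0 zero_complex.simps(1) Re_complex_of_real Im_complex_of_real zero_complex.simps(2))
  have n1: "1 + b \<noteq> 0" unfolding ab using ab(4)
    by (metis of_real_1 of_real_add of_real_eq_0_iff add_nonneg_eq_0_iff zero_le_one one_neq_zero)
  have n2: "1 + b + a \<noteq> 0" unfolding ab using ab(3,4)
    by (metis of_real_1 of_real_add of_real_eq_0_iff add_nonneg_eq_0_iff zero_le_one one_neq_zero add_nonneg_nonneg)
  have n3: "1 + a / (1 + b) \<noteq> 0" using n1 n2 by (simp add: field_simps)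
  show ?thesis using n1 n2 n3 by (simp add: field_simps)
qed




lemma inv_pd: assumes S: "(S::complex mat) \<in> carrier_mat N N" and pd: "pos_def_mat S"
  and W: "W \<in> carrier_mat N N" and SW: "S * W = 1\<^sub>m N" and WS: "W * S = 1\<^sub>m N"
  shows "pos_def_mat W"
proof -
  have SH: "mat_adjoint S = S" using pd_hermitian[OF pd] .
  have WH: "mat_adjoint W = W" using herm_inv[OF S SH W SW WS] .
  have "qform v W v \<in> \<real> \<and> 0 < Re (qform v W v)" if v: "v \<in> carrier_vec N" "v \<noteq> 0\<^sub>v N" for v
  proof -
    define w where "w = W *\<^sub>v v"
    have dw: "dim_vec w = N" unfolding w_def using W by simp
    have Sw: "S *\<^sub>v w = v" unfolding w_def using S W v by (simp add: mvassoc[symmetric] SW mv_one)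
    have w0: "w \<noteq> 0\<^sub>v N" using Sw v S by (auto simp: mv_zerov)
    have "qform v W v = conjugate v \<bullet> w" unfolding qform_alt w_def ..
    also have "\<dots> = conjugate (S *\<^sub>v w) \<bullet> w" by (simp only: Sw)
    also have "\<dots> = conjugate w \<bullet> (S *\<^sub>v w)" using sprod_adj'[of w S w] S dw SH by simp
    also have "\<dots> = qform w S w" unfolding qform_alt ..
    finally show ?thesis using pd S dw w0 unfolding pos_def_mat_def by (auto intro: carrier_vecI)
  qed
  thus ?thesis unfolding pos_def_mat_def hermitian_mat_def using W WH by auto
qed

lemma R_sandwich: assumes R: "(R::complex mat) \<in> carrier_mat N N" and RH: "mat_adjoint R = R"
  and RR: "R * R = W" and E: "E \<in> carrier_mat N k"
  and Gi: "mat_inv (mat_adjoint E * W * E) \<in> carrier_mat k k"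
  shows "R * proj_perp (R * E) * R = W - W * E * mat_inv (mat_adjoint E * W * E) * mat_adjoint E * W"
proof -
  define Gi' where "Gi' = mat_inv (mat_adjoint E * W * E)"
  have dims: "dim_row R = N" "dim_col R = N" "dim_row E = N" "dim_col E = k" "dim_row (mat_adjoint E) = k"
    "dim_col (mat_adjoint E) = N" "dim_row Gi' = k" "dim_col Gi' = k" using R E Gi unfolding Gi'_def by auto
  have dW: "dim_row W = N" "dim_col W = N" using RR dims by auto
  have aRE: "mat_adjoint (R * E) = mat_adjoint E * R" using adj_mult[OF R E] RH by simp
  have G: "mat_adjoint (R * E) * (R * E) = mat_adjoint E * W * E" unfolding aRE RR[symmetric]
    using dims by (simp add: massoc)
  have "proj_perp (R * E) = 1\<^sub>m N - R * E * Gi' * (mat_adjoint E * R)"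
    unfolding proj_perp_def proj_mat_def G Gi'_def using dims by (simp add: G[unfolded aRE] aRE)
  hence "R * proj_perp (R * E) * R = R * (1\<^sub>m N - R * E * Gi' * (mat_adjoint E * R)) * R" by simp
  also have "\<dots> = R * R - (R * R) * E * Gi' * mat_adjoint E * (R * R)"
    using dims by (simp add: mdist_l_minus mdist_r_minus mone_r massoc)
  finally show ?thesis unfolding RR Gi'_def .
qed

lemma sub_compose: assumes X: "(X::complex mat) \<in> carrier_mat N N" and F: "F \<in> carrier_mat N n"
  and P: "P \<in> carrier_mat n a" and Q: "Q \<in> carrier_mat n b"
  shows "mat_adjoint P * (mat_adjoint F * X * F) * Q = mat_adjoint (F * P) * X * (F * Q)"
  using X F P Q by (simp add: adj_mult[OF F P] massoc)

lemma subv_compose: assumes F: "(F::complex mat) \<in> carrier_mat N n"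
  and P: "P \<in> carrier_mat n a" and z: "dim_vec z = N"
  shows "mat_adjoint P *\<^sub>v (mat_adjoint F *\<^sub>v z) = mat_adjoint (F * P) *\<^sub>v z"
  using F P z by (simp add: adj_mult[OF F P] mvassoc)




theorem mainTheorem6:
  fixes N t r K :: nat and z :: "complex vec" and S :: "complex mat"
  assumes "N \<ge> 2" and "t \<ge> 1" and "r \<ge> 1" and "t + r < N" and "K \<ge> N"
    and "z \<in> carrier_vec N" and "S \<in> carrier_mat N N" and "pos_def_mat S"
  shows
    "let m = t + r;
         R = inv_sqrt S;
         z2 = subvec z t r; z3 = subvec z m (N - m);
         S22 = subblock S t r t r; S23 = subblock S t r m (N - m);
         S32 = subblock S m (N - m) t r; S33 = subblock S m (N - m) m (N - m);
         z23 = z2 - S23 * mat_inv S33 *\<^sub>v z3;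
         S23' = S22 - S23 * mat_inv S33 * S32;
         m1 = qform z23 (mat_inv S23') z23;
         m2 = qform z3 (mat_inv S33) z3;
         p1 = 1 / (1 + m1 / (1 + m2));
         p2 = 1 / (1 + m2);
         qt = qform z (R * proj_perp (R * E_t N t) * R) z;
         qm = qform z (R * proj_perp (R * E_m N t r) * R) z;
         tGLRT = (1 + qt) / (1 + qm)
     in qt = (1 - p1 * p2) / (p1 * p2) \<and> qm = (1 - p2) / p2 \<and> tGLRT = 1 / p1"
proof -
  note zc = assms(6) and S = assms(7) and pd = assms(8)
  define m where "m = t + r"
  have mN: "m < N" "t < N" using assms(4) unfolding m_def by auto
  have dz: "dim_vec z = N" using zc by simp
  have SH: "mat_adjoint S = S" using pd_hermitian[OF pd] .
  define W where "W = mat_inv S"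
  have Wp: "W \<in> carrier_mat N N" "S * W = 1\<^sub>m N" "W * S = 1\<^sub>m N"
    unfolding W_def using mat_inv_props[OF S pd_ker[OF S pd]] by auto
  have Wpd: "pos_def_mat W" using inv_pd[OF S pd Wp] .
  define R where "R = inv_sqrt S"
  have Rex: "\<exists>R. R \<in> carrier_mat (dim_row S) (dim_row S) \<and> pos_def_mat R \<and> R * R = mat_inv S"
    using sqrt_exists[OF Wp(1) Wpd] S unfolding W_def by auto
  have Rp: "R \<in> carrier_mat N N" "pos_def_mat R" "R * R = W"
    using someI_ex[OF Rex] S unfolding R_def inv_sqrt_def W_def by auto
  have RH: "mat_adjoint R = R" using pd_hermitian[OF Rp(2)] .
  define Et where "Et = sel N 0 t"
  define Ft where "Ft = sel N t (N - t)"
  define Em where "Em = sel N 0 m"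
  define F3 where "F3 = sel N m (N - m)"
  define Er where "Er = sel N t r"
  define P2 where "P2 = sel (N - t) 0 r"
  define P3 where "P3 = sel (N - t) r (N - m)"
  have selc: "Et \<in> carrier_mat N t" "Ft \<in> carrier_mat N (N - t)" "Em \<in> carrier_mat N m"
    "F3 \<in> carrier_mat N (N - m)" "Er \<in> carrier_mat N r" "P2 \<in> carrier_mat (N - t) r"
    "P3 \<in> carrier_mat (N - t) (N - m)"
    unfolding Et_def Ft_def Em_def F3_def Er_def P2_def P3_def by auto
  have FtP2: "Ft * P2 = Er" unfolding Ft_def P2_def Er_def using mN m_def by (subst sel_sel) auto
  have FtP3: "Ft * P3 = F3" unfolding Ft_def P3_def F3_def using mN m_def by (subst sel_sel) auto
  define S33 where "S33 = mat_adjoint F3 * S * F3"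
  have S33p: "mat_inv S33 \<in> carrier_mat (N - m) (N - m)" "S33 * mat_inv S33 = 1\<^sub>m (N - m)"
    "mat_inv S33 * S33 = 1\<^sub>m (N - m)" "mat_adjoint S33 = S33"
    "\<And>w. dim_vec w = N - m \<Longrightarrow> 0 \<le> qform w S33 w"
    using compress_props[OF S pd selc(4)] unfolding S33_def F3_def using mN by (auto simp: adj_sel_same)
  have Gm: "mat_inv (mat_adjoint Em * W * Em) \<in> carrier_mat m m"
    "mat_adjoint Em * W * Em * mat_inv (mat_adjoint Em * W * Em) = 1\<^sub>m m"
    "mat_inv (mat_adjoint Em * W * Em) * (mat_adjoint Em * W * Em) = 1\<^sub>m m"
    using compress_props[OF Wp(1) Wpd selc(3)] unfolding Em_def using mN by (auto simp: adj_sel_same)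
  have Xm: "W - W * Em * mat_inv (mat_adjoint Em * W * Em) * mat_adjoint Em * W = F3 * mat_inv S33 * mat_adjoint F3"
    by (rule proj_lemma[OF S Wp(1) Wp(2) Wp(3) selc(3) selc(4) _ _ _ _ Gm(1) Gm(2) Gm(3) S33p(1)[unfolded S33_def] S33p(2)[unfolded S33_def], folded S33_def])
       (use mN in \<open>auto simp: Em_def F3_def adj_sel_same adj_sel_disj sel_split\<close>)
  have qm: "qform z (R * proj_perp (R * E_m N t r) * R) z = qform (mat_adjoint F3 *\<^sub>v z) (mat_inv S33) (mat_adjoint F3 *\<^sub>v z)"
  proof -
    have "R * proj_perp (R * E_m N t r) * R = F3 * mat_inv S33 * mat_adjoint F3"
      unfolding E_m_sel m_def[symmetric] Em_def[symmetric] Xm[symmetric]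
      by (rule R_sandwich[OF Rp(1) RH Rp(3) selc(3) Gm(1)])
    thus ?thesis using qform_sandwich[of z F3 "mat_inv S33"] dz selc S33p by auto
  qed
  define Ht where "Ht = mat_adjoint Ft * S * Ft"
  have Htp: "mat_inv Ht \<in> carrier_mat (N - t) (N - t)" "Ht * mat_inv Ht = 1\<^sub>m (N - t)"
    "mat_inv Ht * Ht = 1\<^sub>m (N - t)" "mat_adjoint Ht = Ht"
    "\<And>w. dim_vec w = N - t \<Longrightarrow> 0 \<le> qform w Ht w"
    using compress_props[OF S pd selc(2)] unfolding Ht_def Ft_def using mN by (auto simp: adj_sel_same)
  have Htc: "Ht \<in> carrier_mat (N - t) (N - t)" unfolding Ht_def using selc S by auto
  have Gt: "mat_inv (mat_adjoint Et * W * Et) \<in> carrier_mat t t"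
    "mat_adjoint Et * W * Et * mat_inv (mat_adjoint Et * W * Et) = 1\<^sub>m t"
    "mat_inv (mat_adjoint Et * W * Et) * (mat_adjoint Et * W * Et) = 1\<^sub>m t"
    using compress_props[OF Wp(1) Wpd selc(1)] unfolding Et_def using mN by (auto simp: adj_sel_same)
  have Xt: "W - W * Et * mat_inv (mat_adjoint Et * W * Et) * mat_adjoint Et * W = Ft * mat_inv Ht * mat_adjoint Ft"
    by (rule proj_lemma[OF S Wp(1) Wp(2) Wp(3) selc(1) selc(2) _ _ _ _ Gt(1) Gt(2) Gt(3) Htp(1)[unfolded Ht_def] Htp(2)[unfolded Ht_def], folded Ht_def])
       (use mN in \<open>auto simp: Et_def Ft_def adj_sel_same adj_sel_disj sel_split\<close>)
  define x where "x = mat_adjoint Ft *\<^sub>v z"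
  have dx: "dim_vec x = N - t" unfolding x_def using selc by simp
  have qt: "qform z (R * proj_perp (R * E_t N t) * R) z = qform x (mat_inv Ht) x"
  proof -
    have "R * proj_perp (R * E_t N t) * R = Ft * mat_inv Ht * mat_adjoint Ft"
      unfolding E_t_sel Et_def[symmetric] Xt[symmetric]
      by (rule R_sandwich[OF Rp(1) RH Rp(3) selc(1) Gt(1)])
    thus ?thesis using qform_sandwich[of z Ft "mat_inv Ht"] dz selc Htp unfolding x_def by auto
  qed
  define D where "D = mat_adjoint P3 * Ht * P3"
  have DS33: "D = S33" unfolding D_def Ht_def S33_def FtP3[symmetric]
    by (rule sub_compose[OF S selc(2) selc(7) selc(7)])
  define Sc where "Sc = mat_adjoint P2 * Ht * P2 - mat_adjoint P2 * Ht * P3 * mat_inv D * (mat_adjoint P3 * Ht * P2)"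
  have Scc: "Sc \<in> carrier_mat r r" unfolding Sc_def using selc Htc S33p(1) DS33 by auto
  have P22: "mat_adjoint P2 * P2 = 1\<^sub>m r" unfolding P2_def using mN m_def by (intro adj_sel_same) simp
  have P23: "mat_adjoint P2 * P3 = 0\<^sub>m r (N - m)" unfolding P2_def P3_def using mN m_def by (simp add: adj_sel_disj)
  have Psplit: "P2 * mat_adjoint P2 + P3 * mat_adjoint P3 = 1\<^sub>m (N - t)"
    unfolding P2_def P3_def using sel_split[of r "N - t"] mN m_def by (simp add: diff_diff_left)
  have Dp: "mat_inv D \<in> carrier_mat (N - m) (N - m)" "mat_adjoint P3 * Ht * P3 * mat_inv D = 1\<^sub>m (N - m)"
    "mat_inv D * (mat_adjoint P3 * Ht * P3) = 1\<^sub>m (N - m)"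
    using S33p unfolding DS33[symmetric] D_def by auto
  have Scp: "mat_inv Sc \<in> carrier_mat r r" "Sc * mat_inv Sc = 1\<^sub>m r" "mat_inv Sc * Sc = 1\<^sub>m r"
  proof -
    have ker: "v = 0\<^sub>v r" if "v \<in> carrier_vec r" "Sc *\<^sub>v v = 0\<^sub>v r" for v
      by (rule sc_ker[OF Htc Htp(1) Htp(3) selc(6) selc(7) P22 P23 Psplit Dp(1) Dp(2)])
         (use that in \<open>auto simp: Sc_def\<close>)
    from mat_inv_props[OF Scc ker]
    show "mat_inv Sc \<in> carrier_mat r r" "Sc * mat_inv Sc = 1\<^sub>m r" "mat_inv Sc * Sc = 1\<^sub>m r" by auto
  qed
  have schur: "\<And>x. dim_vec x = N - t \<Longrightarrow> qform x (mat_inv Ht) x =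
     qform (mat_adjoint P2 *\<^sub>v x - mat_adjoint P2 * Ht * P3 * mat_inv D *\<^sub>v (mat_adjoint P3 *\<^sub>v x)) (mat_inv Sc)
           (mat_adjoint P2 *\<^sub>v x - mat_adjoint P2 * Ht * P3 * mat_inv D *\<^sub>v (mat_adjoint P3 *\<^sub>v x))
     + qform (mat_adjoint P3 *\<^sub>v x) (mat_inv D) (mat_adjoint P3 *\<^sub>v x)"
    by (rule schur_qform[OF Htc Htp(1) Htp(2) Htp(4) selc(6) selc(7) P23 Psplit Dp Scp(1)])
       (use Scp(3) in \<open>auto simp: Sc_def\<close>)
  have blocks: "subblock S t r t r = mat_adjoint P2 * Ht * P2"
    "subblock S t r m (N - m) = mat_adjoint P2 * Ht * P3"
    "subblock S m (N - m) t r = mat_adjoint P3 * Ht * P2"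
    "subblock S m (N - m) m (N - m) = D"
    unfolding Ht_def D_def
    using sub_compose[OF S selc(2) selc(6) selc(6)] sub_compose[OF S selc(2) selc(6) selc(7)]
      sub_compose[OF S selc(2) selc(7) selc(6)] sub_compose[OF S selc(2) selc(7) selc(7)]
    unfolding FtP2 FtP3 Er_def F3_def using subblock_sel[OF S] mN m_def by auto
  have vecs: "subvec z t r = mat_adjoint P2 *\<^sub>v x" "subvec z m (N - m) = mat_adjoint P3 *\<^sub>v x"
    unfolding x_def using subv_compose[OF selc(2) selc(6) dz] subv_compose[OF selc(2) selc(7) dz]
    unfolding FtP2 FtP3 Er_def F3_def using subvec_sel[OF zc] mN m_def by auto
  define u where "u = mat_adjoint P2 *\<^sub>v x - mat_adjoint P2 * Ht * P3 * mat_inv D *\<^sub>v (mat_adjoint P3 *\<^sub>v x)"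
  define x3 where "x3 = mat_adjoint P3 *\<^sub>v x"
  have du: "dim_vec u = r" unfolding u_def using selc by simp
  have qt2: "qform x (mat_inv Ht) x = qform u (mat_inv Sc) u + qform x3 (mat_inv D) x3"
    using schur[OF dx] unfolding u_def x3_def .
  have m2nn: "0 \<le> qform x3 (mat_inv D) x3"
    unfolding DS33 by (rule inv_psd[of S33 "N - m"]) (use S33p selc S in \<open>auto simp: S33_def x3_def\<close>)
  have m1nn: "0 \<le> qform u (mat_inv Sc) u"
  proof -
    have "qform (P2 *\<^sub>v u) (mat_inv Ht) (P2 *\<^sub>v u) = qform u (mat_inv Sc) u + qform (0\<^sub>v (N - m)) (mat_inv D) (0\<^sub>v (N - m))"
    proof -
      have a: "mat_adjoint P2 *\<^sub>v (P2 *\<^sub>v u) = u" using selc du by (simp add: mvassoc[symmetric] P22 mv_one)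
      have b: "mat_adjoint P3 *\<^sub>v (P2 *\<^sub>v u) = 0\<^sub>v (N - m)"
      proof -
        have P32: "mat_adjoint P3 * P2 = 0\<^sub>m (N - m) r" unfolding P2_def P3_def using mN m_def by (simp add: adj_sel_disj)
        show ?thesis using selc du by (simp add: mvassoc[symmetric] P32 mv_zero)
      qed
      have c: "u - mat_adjoint P2 * Ht * P3 * mat_inv D *\<^sub>v 0\<^sub>v (N - m) = u"
        using selc du Dp by (intro eq_vecI) (auto simp: mv_zerov)
      show ?thesis using schur[of "P2 *\<^sub>v u"] selc unfolding a b c by simp
    qed
    moreover have "qform (0\<^sub>v (N - m)) (mat_inv D) (0\<^sub>v (N - m)) = 0" unfolding qform_alt using Dp(1) by (simp add: mv_zerov)
    moreover have "0 \<le> qform (P2 *\<^sub>v u) (mat_inv Ht) (P2 *\<^sub>v u)"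
    proof (rule inv_psd[OF Htc Htp(4) Htp(1) Htp(2)])
      show "dim_vec (P2 *\<^sub>v u) = N - t" unfolding P2_def by simp
    qed (rule Htp(5))
    ultimately show ?thesis by simp
  qed
  have qt3: "qform z (R * proj_perp (R * E_t N t) * R) z = qform u (mat_inv Sc) u + qform x3 (mat_inv D) x3"
    using qt qt2 by simp
  have qm3: "qform z (R * proj_perp (R * E_m N t r) * R) z = qform x3 (mat_inv D) x3"
    unfolding qm x3_def DS33 using vecs subvec_sel[OF zc, of m "N - m"] mN F3_def by auto
  have idm1: "qform (subvec z t r - subblock S t r (t + r) (N - (t + r)) * mat_inv (subblock S (t + r) (N - (t + r)) (t + r) (N - (t + r))) *\<^sub>v subvec z (t + r) (N - (t + r)))
        (mat_inv (subblock S t r t r - subblock S t r (t + r) (N - (t + r)) * mat_inv (subblock S (t + r) (N - (t + r)) (t + r) (N - (t + r))) * subblock S (t + r) (N - (t + r)) t r))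
        (subvec z t r - subblock S t r (t + r) (N - (t + r)) * mat_inv (subblock S (t + r) (N - (t + r)) (t + r) (N - (t + r))) *\<^sub>v subvec z (t + r) (N - (t + r))) =
      qform u (mat_inv Sc) u"
    unfolding m_def[symmetric] blocks vecs u_def Sc_def ..
  have idm2: "qform (subvec z (t + r) (N - (t + r))) (mat_inv (subblock S (t + r) (N - (t + r)) (t + r) (N - (t + r)))) (subvec z (t + r) (N - (t + r)))
     = qform x3 (mat_inv D) x3"
    unfolding m_def[symmetric] blocks vecs x3_def ..
  show ?thesis unfolding Let_def R_def[symmetric] idm1 idm2 qt3 qm3
    using final_arith[OF m1nn m2nn] by blast
qed


end
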